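(* Let $0<\varepsilon\le1/2$, $q\in(0,1]$ and let $\mathcal G=(G_n)_{n\in\mathbb N}$ be an expander sequence. Let $(\tilde G_n)$ be such that each $\tilde G_n$ is obtained by deleting edges of $G_n$ such that each vertex keeps at least a $(1/2+\varepsilon)$ fraction of its edges. Let $\mathcal P\in\{push,pull,pp\}$, run on $\tilde G_n$, and suppose that $|I_t|<\sqrt{\log n}$. Then there is $\tau=o(\log n)$ such that whp $|I^{(\mathcal P)}_{t+\tau}|\ge\sqrt{\log n}$.
   Context: Rumour spreading protocols in synchronous rounds with each message transmission succeeding independently with probability $q$. push: every informed vertex chooses a neighbour independently and uniformly at random (iuar) and informs it. pull: every uninformed vertex chooses a neighbour iuar and becomes informed if that neighbour is informed. push\&pull (pp): every vertex chooses a neighbour iuar and if one of the two is informed both become informed. $I_t=I_t^{(\mathcal P)}$ is the set of informed vertices at the beginning of round $t$. An expander sequence is a sequence $(G_n)$ of connected graphs, $G_n$ on $n$ vertices with minimum degree $\delta_n$, maximum degree $\Delta_n$, and $\lambda_n=\max\{|\mu_2|,|\mu_n|\}$ (adjacency eigenvalues), such that $\Delta_n/\delta_n=1+o(1)$ and $\lambda_n=o(\Delta_n)$. "Keeps at least a $(1/2+\varepsilon)$ fraction" means $d_{\tilde G_n}(v)\ge(1/2+\varepsilon)d_{G_n}(v)$. whp means with probability $1-o(1)$ as $n\to\infty$ (conditional on the state at round $t$); natural log. *)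

theory Defs
  imports "HOL-Probability.Probability" "HOL-Library.Landau_Symbols"
          "Jordan_Normal_Form.Matrix" "Jordan_Normal_Form.Char_Poly"
begin

(* A graph on the vertex set {..<n} is given by an edge predicate E :: nat => nat => bool. *)

definition simple_graph :: "nat \<Rightarrow> (nat \<Rightarrow> nat \<Rightarrow> bool) \<Rightarrow> bool" where
  "simple_graph n E \<longleftrightarrow>
     (\<forall>u v. E u v \<longrightarrow> u < n \<and> v < n) \<and> (\<forall>u v. E u v \<longrightarrow> E v u) \<and> (\<forall>u. \<not> E u u)"

definition nbrs :: "nat \<Rightarrow> (nat \<Rightarrow> nat \<Rightarrow> bool) \<Rightarrow> nat \<Rightarrow> nat set" where
  "nbrs n E v = {u. u < n \<and> E v u}"

definition deg :: "nat \<Rightarrow> (nat \<Rightarrow> nat \<Rightarrow> bool) \<Rightarrow> nat \<Rightarrow> nat" where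
  "deg n E v = card (nbrs n E v)"

definition min_deg :: "nat \<Rightarrow> (nat \<Rightarrow> nat \<Rightarrow> bool) \<Rightarrow> nat" where
  "min_deg n E = Min (deg n E ` {..<n})"

definition max_deg :: "nat \<Rightarrow> (nat \<Rightarrow> nat \<Rightarrow> bool) \<Rightarrow> nat" where
  "max_deg n E = Max (deg n E ` {..<n})"

definition connected_graph :: "nat \<Rightarrow> (nat \<Rightarrow> nat \<Rightarrow> bool) \<Rightarrow> bool" where
  "connected_graph n E \<longleftrightarrow> (\<forall>u<n. \<forall>v<n. (u, v) \<in> {(a, b). E a b}\<^sup>*)"

definition adj_matrix :: "nat \<Rightarrow> (nat \<Rightarrow> nat \<Rightarrow> bool) \<Rightarrow> real mat" where
  "adj_matrix n E = mat n n (\<lambda>(i, j). if E i j then 1 else 0)"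

(* adjacency eigenvalues mu_1 >= mu_2 >= ... >= mu_n, listed with multiplicity
   (the characteristic polynomial of the real symmetric adjacency matrix splits over the reals) *)
definition adj_eigenvalues :: "nat \<Rightarrow> (nat \<Rightarrow> nat \<Rightarrow> bool) \<Rightarrow> real list" where
  "adj_eigenvalues n E = (THE es. length es = n \<and> sorted_wrt (\<ge>) es \<and>
       char_poly (adj_matrix n E) = (\<Prod>a\<leftarrow>es. [:- a, 1:]))"

definition lambda_graph :: "nat \<Rightarrow> (nat \<Rightarrow> nat \<Rightarrow> bool) \<Rightarrow> real" where
  "lambda_graph n E = (let es = adj_eigenvalues n E in max \<bar>es ! 1\<bar> \<bar>es ! (n - 1)\<bar>)"

(* G n is the edge predicate of the n-th graph, on vertex set {..<n} *)
definition expander_sequence :: "(nat \<Rightarrow> nat \<Rightarrow> nat \<Rightarrow> bool) \<Rightarrow> bool" where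
  "expander_sequence G \<longleftrightarrow>
     (\<forall>n. simple_graph n (G n) \<and> connected_graph n (G n)) \<and>
     ((\<lambda>n. real (max_deg n (G n)) / real (min_deg n (G n))) \<longlonglongrightarrow> 1) \<and>
     (\<lambda>n. lambda_graph n (G n)) \<in> o(\<lambda>n. real (max_deg n (G n)))"

datatype protocol = Push | Pull | PushPull

(* each vertex v chooses a neighbour iuar (None if it has no neighbour) and a success coin
   (the message transmitted on this call succeeds with probability q), all independent *)
definition choice_pmf :: "nat \<Rightarrow> (nat \<Rightarrow> nat \<Rightarrow> bool) \<Rightarrow> real \<Rightarrow> nat \<Rightarrow> (nat option \<times> bool) pmf" where
  "choice_pmf n E q v =
     pair_pmf (if nbrs n E v = {} then return_pmf None else map_pmf Some (pmf_of_set (nbrs n E v)))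
              (bernoulli_pmf q)"

definition round_choices :: "nat \<Rightarrow> (nat \<Rightarrow> nat \<Rightarrow> bool) \<Rightarrow> real \<Rightarrow> (nat \<Rightarrow> nat option \<times> bool) pmf" where
  "round_choices n E q = Pi_pmf {..<n} (None, False) (choice_pmf n E q)"

fun next_informed :: "protocol \<Rightarrow> nat \<Rightarrow> nat set \<Rightarrow> (nat \<Rightarrow> nat option \<times> bool) \<Rightarrow> nat set" where
  "next_informed Push n I c =
     I \<union> {u. \<exists>v\<in>I. v < n \<and> c v = (Some u, True)}"
| "next_informed Pull n I c =
     I \<union> {v. v < n \<and> (\<exists>u\<in>I. c v = (Some u, True))}"
| "next_informed PushPull n I c =
     I \<union> {u. \<exists>v\<in>I. v < n \<and> c v = (Some u, True)}
       \<union> {v. v < n \<and> (\<exists>u\<in>I. c v = (Some u, True))}"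

definition rumour_round :: "protocol \<Rightarrow> nat \<Rightarrow> (nat \<Rightarrow> nat \<Rightarrow> bool) \<Rightarrow> real \<Rightarrow> nat set \<Rightarrow> nat set pmf" where
  "rumour_round P n E q I = map_pmf (next_informed P n I) (round_choices n E q)"

primrec rumour_run :: "protocol \<Rightarrow> nat \<Rightarrow> (nat \<Rightarrow> nat \<Rightarrow> bool) \<Rightarrow> real \<Rightarrow> nat \<Rightarrow> nat set \<Rightarrow> nat set pmf" where
  "rumour_run P n E q 0 I = return_pmf I"
| "rumour_run P n E q (Suc k) I = bind_pmf (rumour_run P n E q k I) (rumour_round P n E q)"

end

theory Submission
  imports Defs "Jordan_Normal_Form.Schur_Decomposition" "HOL-Real_Asymp.Real_Asymp"
begin

lemma conj_real_vec[simp]: "conjugate (w :: real vec) = w"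
  by (rule eq_vecI) (auto simp: conjugate_real_def)

lemma scalar_prod_self_nonneg: "scalar_prod (w::real vec) w \<ge> 0"
  unfolding scalar_prod_def by (intro sum_nonneg) auto

lemma orthonormal_completion:
  fixes v :: "real vec"
  assumes v: "v \<in> carrier_vec n" and v1: "scalar_prod v v = 1"
  shows "\<exists>W \<in> carrier_mat n n. transpose_mat W * W = 1\<^sub>m n \<and> W * transpose_mat W = 1\<^sub>m n \<and> col W 0 = v"
proof -
  have n: "n \<noteq> 0"
  proof
    assume "n = 0"
    then have "scalar_prod v v = 0" using v by (simp add: scalar_prod_def)
    then show False using v1 by simp
  qed
  have v0: "v \<noteq> 0\<^sub>v n" using v1 by auto
  interpret cof_vec_space n "TYPE(real)" .
  define b where "b = basis_completion v"
  from basis_completion[OF v v0, folded b_def]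
  have b: "set b \<subseteq> carrier_vec n" "distinct b" "\<not> lin_dep (set b)" "length b = n" "hd b = v"
    by auto
  from b n obtain vs where bv: "b = v # vs" by (cases b) auto
  define ws where "ws = gram_schmidt n b"
  from gram_schmidt_result[OF b(1) b(2) b(3) ws_def]
  have ws: "corthogonal ws" "set ws \<subseteq> carrier_vec n" "length ws = n" by (auto simp: b(4))
  have hdws: "hd ws = v" unfolding ws_def bv using gram_schmidt_hd[OF v] by simp
  have wsc: "i < n \<Longrightarrow> ws ! i \<in> carrier_vec n" for i using ws by auto
  have pos: "scalar_prod (ws!i) (ws!i) > 0" if i: "i < n" for i
  proof -
    have "ws ! i \<bullet>c ws ! i \<noteq> 0" using corthogonalD[OF ws(1)] i ws(3) by auto
    then have "scalar_prod (ws!i) (ws!i) \<noteq> 0" by simp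
    then show ?thesis using scalar_prod_self_nonneg[of "ws!i"] by linarith
  qed
  have orth0: "i < n \<Longrightarrow> j < n \<Longrightarrow> i \<noteq> j \<Longrightarrow> scalar_prod (ws!i) (ws!j) = 0" for i j
    using corthogonalD[OF ws(1), of i j] ws(3) by auto
  define us where "us = map (\<lambda>w. (1 / sqrt (scalar_prod w w)) \<cdot>\<^sub>v w) ws"
  have usl: "length us = n" using ws by (simp add: us_def)
  have usc: "i < n \<Longrightarrow> us ! i \<in> carrier_vec n" for i using wsc ws(3) by (auto simp: us_def)
  have us_orth: "scalar_prod (us!i) (us!j) = (if i = j then 1 else 0)" if i: "i < n" and j: "j < n" for i j
  proof -
    have "scalar_prod (us!i) (us!j) = (1 / sqrt (scalar_prod (ws!i) (ws!i))) * (1 / sqrt (scalar_prod (ws!j) (ws!j))) * scalar_prod (ws!i) (ws!j)"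
      using i j ws(3) wsc[OF i] wsc[OF j]
      by (simp add: us_def smult_scalar_prod_distrib scalar_prod_smult_distrib)
    also have "\<dots> = (if i = j then 1 else 0)"
    proof (cases "i = j")
      case True
      have p: "scalar_prod (ws!i) (ws!i) > 0" using pos[OF i] .
      then show ?thesis using True
        by (simp add: field_simps)
    next
      case False
      then show ?thesis using orth0[OF i j] by simp
    qed
    finally show ?thesis .
  qed
  define W where "W = mat_of_cols n us"
  have W: "W \<in> carrier_mat n n" unfolding W_def using mat_of_cols_carrier(1)[of n us] usl by simp
  have colW: "j < n \<Longrightarrow> col W j = us ! j" for j
    unfolding W_def using usl usc by (simp add: col_mat_of_cols)
  have WTW: "transpose_mat W * W = 1\<^sub>m n"
  proof (rule eq_matI)
    fix i j assume i: "i < dim_row (1\<^sub>m n)" and j: "j < dim_col (1\<^sub>m n)"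
    then have i: "i < n" and j: "j < n" by auto
    have "(transpose_mat W * W) $$ (i, j) = scalar_prod (row (transpose_mat W) i) (col W j)"
      using i j W by (simp add: index_mult_mat)
    also have "\<dots> = scalar_prod (col W i) (col W j)" using i W by simp
    also have "\<dots> = 1\<^sub>m n $$ (i, j)" using i j by (simp add: colW us_orth)
    finally show "(transpose_mat W * W) $$ (i, j) = 1\<^sub>m n $$ (i, j)" .
  next
    show "dim_row (transpose_mat W * W) = dim_row (1\<^sub>m n)" using W by simp
  next
    show "dim_col (transpose_mat W * W) = dim_col (1\<^sub>m n)" using W by simp
  qed
  have WWT: "W * transpose_mat W = 1\<^sub>m n"
    by (rule mat_mult_left_right_inverse[OF _ W WTW]) (use W in simp)
  have "col W 0 = us ! 0" using colW n by simp
  also have "us ! 0 = hd us" using usl n by (cases us) auto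
  also have "hd us = v" using hdws ws(3) n v1 by (cases ws) (auto simp: us_def)
  finally show ?thesis using W WTW WWT by blast
qed


lemma scalar_prod_sum: "v \<in> carrier_vec n \<Longrightarrow> w \<in> carrier_vec n \<Longrightarrow>
  scalar_prod v w = (\<Sum>i<n. vec_index v i * vec_index w i)"
  unfolding scalar_prod_def by (simp add: atLeast0LessThan)

lemma sym_deflate:
  fixes A :: "real mat"
  assumes A: "A \<in> carrier_mat n n" and sym: "transpose_mat A = A" and root: "poly (char_poly A) e = 0"
  shows "\<exists>v A3. v \<in> carrier_vec n \<and> scalar_prod v v = 1 \<and> A *\<^sub>v v = e \<cdot>\<^sub>v v \<and>
     A3 \<in> carrier_mat (n-1) (n-1) \<and> transpose_mat A3 = A3 \<and> char_poly A = [:-e,1:] * char_poly A3 \<and>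
     (\<forall>x\<in>carrier_vec n. \<exists>z\<in>carrier_vec (n-1). scalar_prod z z = scalar_prod x x - (scalar_prod v x)^2 \<and>
         scalar_prod x (A *\<^sub>v x) = e * (scalar_prod v x)^2 + scalar_prod z (A3 *\<^sub>v z))"
proof -
  have ev: "eigenvalue A e" using eigenvalue_root_char_poly[OF A] root by simp
  define v0 where "v0 = find_eigenvector A e"
  have "eigenvector A v0 e" unfolding v0_def by (rule find_eigenvector[OF A ev])
  then have v0: "v0 \<in> carrier_vec n" "v0 \<noteq> 0\<^sub>v n" "A *\<^sub>v v0 = e \<cdot>\<^sub>v v0"
    unfolding eigenvector_def using A by auto
  define s where "s = scalar_prod v0 v0"
  have s: "s > 0" using conjugate_square_greater_0_vec[OF v0(1)] v0(2) by (simp add: s_def)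
  define v where "v = (1 / sqrt s) \<cdot>\<^sub>v v0"
  have v: "v \<in> carrier_vec n" using v0 by (simp add: v_def)
  have v1: "scalar_prod v v = 1"
    using s v0(1) by (simp add: v_def smult_scalar_prod_distrib scalar_prod_smult_distrib s_def[symmetric])
  have Av: "A *\<^sub>v v = e \<cdot>\<^sub>v v"
    unfolding v_def using mult_mat_vec[OF A v0(1)] v0(3) by (simp add: smult_smult_assoc mult.commute)
  have n: "n \<noteq> 0"
  proof
    assume "n = 0"
    then have "scalar_prod v v = 0" using v by (simp add: scalar_prod_def)
    then show False using v1 by simp
  qed
  then obtain n1 where n1: "n = Suc n1" by (cases n) auto
  obtain W where W: "W \<in> carrier_mat n n" and WTW: "transpose_mat W * W = 1\<^sub>m n"
    and WWT: "W * transpose_mat W = 1\<^sub>m n" and colW: "col W 0 = v"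
    using orthonormal_completion[OF v v1] by blast
  have WT: "transpose_mat W \<in> carrier_mat n n" using W by simp
  define A' where "A' = transpose_mat W * A * W"
  have A': "A' \<in> carrier_mat n n" using W A by (simp add: A'_def)
  have symA': "transpose_mat A' = A'"
  proof -
    have "transpose_mat A' = transpose_mat W * transpose_mat (transpose_mat W * A)"
      unfolding A'_def by (rule transpose_mult[OF mult_carrier_mat[OF WT A] W])
    also have "\<dots> = transpose_mat W * (A * W)"
      by (simp only: transpose_mult[OF WT A] transpose_transpose sym)
    also have "\<dots> = A'" unfolding A'_def by (rule assoc_mult_mat[OF WT A W, symmetric])
    finally show ?thesis .
  qed
  have simA: "similar_mat A' A"
    unfolding similar_mat_def similar_mat_wit_def
    by (rule exI[of _ "transpose_mat W"], rule exI[of _ W]) (use A' A W WT WTW WWT in \<open>simp add: A'_def Let_def\<close>)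
  have cpA: "char_poly A' = char_poly A" by (rule char_poly_similar[OF simA])
  have WTv: "transpose_mat W *\<^sub>v v = unit_vec n 0"
  proof (rule eq_vecI)
    fix i assume "i < dim_vec (unit_vec n 0)"
    then have i: "i < n" by simp
    have "vec_index (transpose_mat W *\<^sub>v v) i = scalar_prod (col W i) (col W 0)"
      using i W by (simp add: colW[symmetric])
    also have "\<dots> = (transpose_mat W * W) $$ (i, 0)" using i W n by (simp add: index_mult_mat)
    also have "\<dots> = vec_index (unit_vec n 0) i" using WTW i n by simp
    finally show "vec_index (transpose_mat W *\<^sub>v v) i = vec_index (unit_vec n 0) i" .
  qed (use W in simp)
  have colA': "A' $$ (i, 0) = (if i = 0 then e else 0)" if i: "i < n" for i
  proof -
    have "col A' 0 = transpose_mat W *\<^sub>v (A *\<^sub>v col W 0)"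
    proof -
      have c: "col W 0 \<in> carrier_vec n" using colW v by simp
      have "col A' 0 = (transpose_mat W * A) *\<^sub>v col W 0"
        unfolding A'_def by (rule col_mult2[OF mult_carrier_mat[OF WT A] W]) (use n in simp)
      also have "\<dots> = transpose_mat W *\<^sub>v (A *\<^sub>v col W 0)" by (rule assoc_mult_mat_vec[OF WT A c])
      finally show ?thesis .
    qed
    also have "\<dots> = e \<cdot>\<^sub>v unit_vec n 0" using colW Av mult_mat_vec[OF WT v] WTv by simp
    finally have "col A' 0 = e \<cdot>\<^sub>v unit_vec n 0" .
    then have "vec_index (col A' 0) i = vec_index (e \<cdot>\<^sub>v unit_vec n 0) i" by simp
    then show ?thesis using i A' n by simp
  qed
  have rowA': "A' $$ (0, j) = (if j = 0 then e else 0)" if j: "j < n" for j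
  proof -
    have "A' $$ (0, j) = transpose_mat A' $$ (j, 0)" using A' j n by simp
    then show ?thesis using symA' colA'[OF j] by simp
  qed
  define A3 where "A3 = mat n1 n1 (\<lambda>(i,j). A' $$ (Suc i, Suc j))"
  have A3: "A3 \<in> carrier_mat (n-1) (n-1)" using n1 by (simp add: A3_def)
  have symA3: "transpose_mat A3 = A3"
  proof (rule eq_matI)
    fix i j assume "i < dim_row A3" "j < dim_col A3"
    then have i: "i < n1" and j: "j < n1" by (auto simp: A3_def)
    have "A' $$ (Suc j, Suc i) = transpose_mat A' $$ (Suc i, Suc j)" using A' i j n1 by simp
    then show "transpose_mat A3 $$ (i, j) = A3 $$ (i, j)" using i j symA' by (simp add: A3_def)
  qed (auto simp: A3_def)
  have blk: "A' = four_block_mat (mat 1 1 (\<lambda>_. e)) (0\<^sub>m 1 n1) (0\<^sub>m n1 1) A3"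
  proof (rule eq_matI)
    fix i j assume "i < dim_row (four_block_mat (mat 1 1 (\<lambda>_. e)) (0\<^sub>m 1 n1) (0\<^sub>m n1 1) A3)"
      "j < dim_col (four_block_mat (mat 1 1 (\<lambda>_. e)) (0\<^sub>m 1 n1) (0\<^sub>m n1 1) A3)"
    then have i: "i < n" and j: "j < n" using n1 by (auto simp: A3_def)
    show "A' $$ (i, j) = four_block_mat (mat 1 1 (\<lambda>_. e)) (0\<^sub>m 1 n1) (0\<^sub>m n1 1) A3 $$ (i, j)"
    proof (cases "i = 0 \<or> j = 0")
      case True
      then show ?thesis using colA' rowA' i j n1 by (auto simp: A3_def)
    next
      case False
      then obtain i1 j1 where "i = Suc i1" "j = Suc j1" by (cases i; cases j) auto
      then show ?thesis using i j n1 by (simp add: A3_def)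
    qed
  qed (use A' n1 A3_def in auto)
  have cp1: "char_poly (mat 1 1 (\<lambda>_. e)) = [:-e,1:]"
    by (simp add: char_poly_defs det_def sign_def)
  have cp: "char_poly A = [:-e,1:] * char_poly A3"
  proof -
    have c1: "mat 1 1 (\<lambda>_. e) \<in> carrier_mat 1 1" by simp
    have c2: "(0\<^sub>m 1 n1 :: real mat) \<in> carrier_mat 1 n1" by simp
    have c3: "A3 \<in> carrier_mat n1 n1" by (simp add: A3_def)
    show ?thesis using char_poly_four_block_zeros_col[OF c1 c2 c3] blk cpA cp1 by simp
  qed
  have quad: "\<exists>z\<in>carrier_vec (n-1). scalar_prod z z = scalar_prod x x - (scalar_prod v x)^2 \<and>
         scalar_prod x (A *\<^sub>v x) = e * (scalar_prod v x)^2 + scalar_prod z (A3 *\<^sub>v z)"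
    if x: "x \<in> carrier_vec n" for x
  proof -
    define y where "y = transpose_mat W *\<^sub>v x"
    have y: "y \<in> carrier_vec n" using WT x by (simp add: y_def)
    have xWy: "x = W *\<^sub>v y"
      unfolding y_def using assoc_mult_mat_vec[OF W WT x] WWT x by simp
    have y0: "vec_index y 0 = scalar_prod v x"
      using n W x by (simp add: y_def colW[symmetric])
    have yy: "scalar_prod y y = scalar_prod x x"
    proof -
      have "scalar_prod y y = scalar_prod x (W *\<^sub>v y)"
        using transpose_vec_mult_scalar[OF W y x] by (simp add: y_def)
      then show ?thesis using xWy by simp
    qed
    have xAx: "scalar_prod x (A *\<^sub>v x) = scalar_prod y (A' *\<^sub>v y)"
    proof -
      have "scalar_prod x (A *\<^sub>v x) = scalar_prod (W *\<^sub>v y) (A *\<^sub>v (W *\<^sub>v y))" using xWy by simp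
      also have "\<dots> = scalar_prod y (transpose_mat W *\<^sub>v (A *\<^sub>v (W *\<^sub>v y)))"
        using transpose_vec_mult_scalar[OF WT, of "A *\<^sub>v (W *\<^sub>v y)" y] A W y by simp
      also have "\<dots> = scalar_prod y (A' *\<^sub>v y)"
        unfolding A'_def using A W WT y
        by (simp add: assoc_mult_mat_vec[of _ n n _ n])
      finally show ?thesis .
    qed
    define z where "z = Matrix.vec n1 (\<lambda>i. vec_index y (Suc i))"
    have z: "z \<in> carrier_vec (n-1)" using n1 by (simp add: z_def)
    have zz: "scalar_prod z z = scalar_prod y y - (vec_index y 0)^2"
      using y n1 by (simp add: scalar_prod_sum[of _ n] scalar_prod_sum[of _ n1] z_def sum.lessThan_Suc_shift power2_eq_square del: sum.lessThan_Suc)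
    have Ay: "vec_index (A' *\<^sub>v y) i = (if i = 0 then e * vec_index y 0 else vec_index (A3 *\<^sub>v z) (i - 1))"
      if i: "i < n" for i
    proof -
      have r: "Matrix.row A' i \<in> carrier_vec n" using A' by (simp add: row_def)
      have "vec_index (A' *\<^sub>v y) i = scalar_prod (Matrix.row A' i) y" using A' i by simp
      also have "\<dots> = (\<Sum>j<n. A' $$ (i, j) * vec_index y j)"
        using scalar_prod_sum[OF r y] A' i by simp
      also have "\<dots> = A' $$ (i, 0) * vec_index y 0 + (\<Sum>j<n1. A' $$ (i, Suc j) * vec_index y (Suc j))"
        unfolding n1 by (simp add: sum.lessThan_Suc_shift del: sum.lessThan_Suc)
      also have "\<dots> = (if i = 0 then e * vec_index y 0 else vec_index (A3 *\<^sub>v z) (i - 1))"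
      proof (cases i)
        case 0
        then show ?thesis using rowA' n1 by simp
      next
        case (Suc i1)
        have "(\<Sum>j<n1. A' $$ (i, Suc j) * vec_index y (Suc j)) = vec_index (A3 *\<^sub>v z) i1"
          using Suc i n1 z by (simp add: A3_def z_def scalar_prod_sum[of _ n1])
        then show ?thesis using Suc colA' i by simp
      qed
      finally show ?thesis .
    qed
    have yAy: "scalar_prod y (A' *\<^sub>v y) = e * (vec_index y 0)^2 + scalar_prod z (A3 *\<^sub>v z)"
    proof -
      have "scalar_prod y (A' *\<^sub>v y) = (\<Sum>i<n. vec_index y i * vec_index (A' *\<^sub>v y) i)"
        using y A' by (simp add: scalar_prod_sum[of _ n])
      also have "\<dots> = (\<Sum>i<n. vec_index y i * (if i = 0 then e * vec_index y 0 else vec_index (A3 *\<^sub>v z) (i - 1)))"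
        by (rule sum.cong) (simp_all add: Ay)
      also have "\<dots> = e * (vec_index y 0)^2 + scalar_prod z (A3 *\<^sub>v z)"
        using n1 A3 z by (simp add: sum.lessThan_Suc_shift scalar_prod_sum[of _ n1] z_def power2_eq_square del: sum.lessThan_Suc)
      finally show ?thesis .
    qed
    show ?thesis using z zz yy xAx yAy y0 by auto
  qed
  show ?thesis using v v1 Av A3 symA3 cp quad by blast
qed


lemma sym_real_eigenvalue:
  fixes A :: "real mat"
  assumes A: "A \<in> carrier_mat n n" and sym: "transpose_mat A = A" and n: "n > 0"
  shows "\<exists>e. poly (char_poly A) e = 0"
proof -
  define Ac where "Ac = map_mat complex_of_real A"
  have Ac: "Ac \<in> carrier_mat n n" using A by (simp add: Ac_def)
  have cpAc: "char_poly Ac = map_poly of_real (char_poly A)"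
    unfolding Ac_def by (rule of_real_hom.char_poly_hom[OF A])
  have "degree (char_poly Ac) = n" using degree_monic_char_poly[OF Ac] by simp
  then have "\<not> constant (poly (char_poly Ac))" using n by (simp add: constant_degree)
  then obtain z where z: "poly (char_poly Ac) z = 0" using fundamental_theorem_of_algebra by blast
  have "eigenvalue Ac z" using eigenvalue_root_char_poly[OF Ac] z by simp
  then obtain w where "eigenvector Ac w z" unfolding eigenvalue_def by blast
  then have w: "w \<in> carrier_vec n" "w \<noteq> 0\<^sub>v n" "Ac *\<^sub>v w = z \<cdot>\<^sub>v w"
    unfolding eigenvector_def using Ac by auto
  have Acw: "vec_index (Ac *\<^sub>v w) i = (\<Sum>j<n. of_real (A $$ (i, j)) * vec_index w j)" if i: "i < n" for i
    using i A w(1) by (simp add: Ac_def scalar_prod_sum[of _ n])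
  define S where "S = (\<Sum>i<n. cnj (vec_index w i) * (\<Sum>j<n. of_real (A $$ (i, j)) * vec_index w j))"
  define N where "N = (\<Sum>i<n. cnj (vec_index w i) * vec_index w i)"
  have SzN: "S = z * N"
  proof -
    have "S = (\<Sum>i<n. cnj (vec_index w i) * vec_index (Ac *\<^sub>v w) i)"
      unfolding S_def by (rule sum.cong) (simp_all add: Acw)
    also have "\<dots> = (\<Sum>i<n. cnj (vec_index w i) * (z * vec_index w i))"
      by (rule sum.cong) (use w in simp_all)
    also have "\<dots> = z * N" unfolding N_def by (simp add: sum_distrib_left mult_ac)
    finally show ?thesis .
  qed
  have Sreal: "cnj S = S"
  proof -
    have symA: "A $$ (i, j) = A $$ (j, i)" if "i < n" "j < n" for i j
    proof -
      have "A $$ (i, j) = transpose_mat A $$ (i, j)" using sym by simp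
      also have "\<dots> = A $$ (j, i)" using that A by simp
      finally show ?thesis .
    qed
    have "cnj S = (\<Sum>i<n. \<Sum>j<n. vec_index w i * of_real (A $$ (i, j)) * cnj (vec_index w j))"
      unfolding S_def by (simp add: sum_distrib_left mult_ac)
    also have "\<dots> = (\<Sum>j<n. \<Sum>i<n. vec_index w i * of_real (A $$ (i, j)) * cnj (vec_index w j))"
      by (rule sum.swap)
    also have "\<dots> = (\<Sum>j<n. \<Sum>i<n. cnj (vec_index w j) * (of_real (A $$ (j, i)) * vec_index w i))"
      by (intro sum.cong refl) (simp add: symA mult_ac)
    also have "\<dots> = S" unfolding S_def by (simp add: sum_distrib_left)
    finally show ?thesis .
  qed
  have Nre: "N = of_real (\<Sum>i<n. (cmod (vec_index w i))^2)"
    unfolding N_def of_real_sum by (intro sum.cong refl) (metis complex_norm_square mult.commute)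
  have Npos: "(\<Sum>i<n. (cmod (vec_index w i))^2) > 0"
  proof -
    obtain k where k: "k < n" "vec_index w k \<noteq> 0"
      using w(1,2) by (metis eq_vecI index_zero_vec(1,2) carrier_vecD)
    have "(cmod (vec_index w k))^2 > 0" using k by simp
    also have "(cmod (vec_index w k))^2 \<le> (\<Sum>i<n. (cmod (vec_index w i))^2)"
      by (rule member_le_sum) (use k in auto)
    finally show ?thesis .
  qed
  have "cnj z = z"
  proof -
    have N0: "N \<noteq> 0"
    proof
      assume "N = 0"
      then have "(\<Sum>i<n. (cmod (vec_index w i))^2) = 0" using Nre by (metis of_real_eq_0_iff)
      then show False using Npos by simp
    qed
    have cN: "cnj N = N" using Nre by (metis complex_cnj_complex_of_real)
    have "cnj z * N = z * N" using Sreal SzN cN by (metis complex_cnj_mult)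
    then show ?thesis using N0 by simp
  qed
  then have "Im z = 0" by (metis complex_cnj_cancel_iff complex_cnj_zero_iff complex_eq_iff complex_cnj_complex_of_real Im_complex_of_real cnj.sel(2) neg_equal_zero)
  then have zr: "z = of_real (Re z)" by (simp add: complex_eq_iff)
  have "of_real (poly (char_poly A) (Re z)) = (0::complex)"
    using z zr cpAc by (metis of_real_hom.poly_map_poly)
  then show ?thesis by auto
qed

lemma char_poly_0:
  assumes "(A :: real mat) \<in> carrier_mat 0 0"
  shows "char_poly A = 1"
proof -
  have d: "degree (char_poly A) = 0" and c: "coeff (char_poly A) 0 = 1"
    using degree_monic_char_poly[OF assms] by simp_all
  from d obtain a where "char_poly A = [:a:]" by (elim degree_eq_zeroE)
  then show ?thesis using c by (simp add: one_pCons)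
qed

lemma linprod_ne0: "(\<Prod>a\<leftarrow>es. [:- a, 1::real:]) \<noteq> 0"
  by (auto simp: prod_list_zero_iff)

lemma degree_linprod: "degree (\<Prod>a\<leftarrow>es. [:- a, 1::real:]) = length es"
proof (induct es)
  case (Cons a es)
  have "degree ([:- a, 1:] * (\<Prod>a\<leftarrow>es. [:- a, 1::real:])) = degree [:- a, 1::real:] + degree (\<Prod>a\<leftarrow>es. [:- a, 1::real:])"
    by (rule degree_mult_eq) (auto simp: linprod_ne0)
  then show ?case using Cons by simp
qed simp

lemma sym_splits:
  fixes A :: "real mat"
  assumes "A \<in> carrier_mat n n" and "transpose_mat A = A"
  shows "\<exists>es. char_poly A = (\<Prod>a\<leftarrow>es. [:- a, 1:])"
  using assms
proof (induct n arbitrary: A)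
  case 0
  then show ?case using char_poly_0 by (intro exI[of _ "[]"]) simp
next
  case (Suc n)
  obtain e where e: "poly (char_poly A) e = 0" using sym_real_eigenvalue[OF Suc(2,3)] by auto
  obtain v A3 where A3: "A3 \<in> carrier_mat n n" "transpose_mat A3 = A3" "char_poly A = [:-e,1:] * char_poly A3"
    using sym_deflate[OF Suc(2,3) e] by auto
  obtain es where "char_poly A3 = (\<Prod>a\<leftarrow>es. [:- a, 1:])" using Suc(1)[OF A3(1,2)] by auto
  then show ?case using A3(3) by (intro exI[of _ "e # es"]) simp
qed

lemma lin_cancel:
  assumes "[:-e,1::real:] * p = [:-e,1:] * q" shows "p = q"
proof -
  have ne: "[:-e,1::real:] \<noteq> 0" by simp
  show ?thesis using assms mult_left_cancel[OF ne] by blast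
qed

lemma roots_linprod: "{x. poly (\<Prod>a\<leftarrow>es. [:- a, 1::real:]) x = 0} = set es"
  by (auto simp: poly_prod_list_zero_iff)

lemma sorted_desc_hd_Max:
  assumes "sorted_wrt (\<ge>) (es :: real list)" "es \<noteq> []"
  shows "hd es = Max (set es)"
  using assms by (cases es) (auto intro!: Max_eqI[symmetric])

lemma linprod_sorted_unique:
  assumes "sorted_wrt (\<ge>) (es1 :: real list)" "sorted_wrt (\<ge>) es2"
    and "(\<Prod>a\<leftarrow>es1. [:- a, 1:]) = (\<Prod>a\<leftarrow>es2. [:- a, 1:])"
  shows "es1 = es2"
  using assms
proof (induct es1 arbitrary: es2)
  case Nil
  then have "length es2 = 0" using degree_linprod[of es2] by simp
  then show ?case by simp
next
  case (Cons a es1)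
  have s: "set (a # es1) = set es2" using roots_linprod Cons(4) by metis
  then have ne: "es2 \<noteq> []" by auto
  then obtain b es2' where es2: "es2 = b # es2'" by (cases es2) auto
  have "a = b" using sorted_desc_hd_Max[OF Cons(2)] sorted_desc_hd_Max[OF Cons(3) ne] s es2 by simp
  then have "[:- a, 1:] * (\<Prod>a\<leftarrow>es1. [:- a, 1:]) = [:- a, 1:] * (\<Prod>a\<leftarrow>es2'. [:- a, 1::real:])"
    using Cons(4) es2 by (simp only: list.map prod_list.Cons)
  then have "(\<Prod>a\<leftarrow>es1. [:- a, 1:]) = (\<Prod>a\<leftarrow>es2'. [:- a, 1::real:])"
    by (rule lin_cancel)
  then have "es1 = es2'" using Cons(1) Cons(2,3) es2 by simp
  then show ?case using es2 \<open>a = b\<close> by simp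
qed

lemma sym_eigenlist:
  fixes A :: "real mat"
  assumes A: "A \<in> carrier_mat n n" and sym: "transpose_mat A = A"
  shows "\<exists>!es. length es = n \<and> sorted_wrt (\<ge>) es \<and> char_poly A = (\<Prod>a\<leftarrow>es. [:- a, 1:])"
proof -
  obtain es0 where es0: "char_poly A = (\<Prod>a\<leftarrow>es0. [:- a, 1:])" using sym_splits[OF A sym] by auto
  define es where "es = rev (sort es0)"
  have "(\<Prod>a\<leftarrow>es. [:- a, 1:]) = (\<Prod>a\<leftarrow>es0. [:- a, 1::real:])"
  proof -
    have m: "mset (map (\<lambda>a. [:- a, 1::real:]) es) = mset (map (\<lambda>a. [:- a, 1:]) es0)"
      unfolding es_def by simp
    show ?thesis by (simp only: prod_mset_prod_list[symmetric] m)
  qed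
  then have cp: "char_poly A = (\<Prod>a\<leftarrow>es. [:- a, 1:])" using es0 by simp
  have "length es = degree (char_poly A)" unfolding cp by (rule degree_linprod[symmetric])
  then have len: "length es = n" using degree_monic_char_poly[OF A] by simp
  have srt: "sorted_wrt (\<ge>) es" unfolding es_def sorted_wrt_rev by simp
  show ?thesis
  proof (rule ex1I[of _ es])
    show "length es = n \<and> sorted_wrt (\<ge>) es \<and> char_poly A = (\<Prod>a\<leftarrow>es. [:- a, 1:])"
      using cp len srt by simp
  next
    fix es' assume h: "length es' = n \<and> sorted_wrt (\<ge>) es' \<and> char_poly A = (\<Prod>a\<leftarrow>es'. [:- a, 1:])"
    then have h3: "char_poly A = (\<Prod>a\<leftarrow>es'. [:- a, 1:])" and h2: "sorted_wrt (\<ge>) es'" by auto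
    have "(\<Prod>a\<leftarrow>es'. [:- a, 1:]) = (\<Prod>a\<leftarrow>es. [:- a, 1::real:])" using trans[OF h3[symmetric] cp] .
    then show "es' = es" using linprod_sorted_unique[OF h2 srt] by simp
  qed
qed

lemma quad_le_max:
  fixes A :: "real mat"
  assumes "A \<in> carrier_mat n n" "transpose_mat A = A" "char_poly A = (\<Prod>a\<leftarrow>es. [:- a, 1:])"
    "x \<in> carrier_vec n"
  shows "scalar_prod x (A *\<^sub>v x) \<le> (if es = [] then 0 else Max (set es)) * scalar_prod x x"
  using assms
proof (induct es arbitrary: n A x)
  case Nil
  have "n = 0" using degree_monic_char_poly[OF Nil(1)] Nil(3) by simp
  then show ?case using Nil by (simp add: scalar_prod_def)
next
  case (Cons e es)
  have e: "poly (char_poly A) e = 0" using Cons(4) by simp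
  obtain v A3 where v: "v \<in> carrier_vec n" and A3: "A3 \<in> carrier_mat (n-1) (n-1)" "transpose_mat A3 = A3"
    and cp: "char_poly A = [:-e,1:] * char_poly A3"
    and q: "\<forall>x\<in>carrier_vec n. \<exists>z\<in>carrier_vec (n-1). scalar_prod z z = scalar_prod x x - (scalar_prod v x)^2 \<and>
         scalar_prod x (A *\<^sub>v x) = e * (scalar_prod v x)^2 + scalar_prod z (A3 *\<^sub>v z)"
    using sym_deflate[OF Cons(2,3) e] by blast
  have cp3: "char_poly A3 = (\<Prod>a\<leftarrow>es. [:- a, 1:])"
  proof (rule lin_cancel[of e])
    show "[:-e,1:] * char_poly A3 = [:-e,1:] * (\<Prod>a\<leftarrow>es. [:- a, 1:])"
      using cp Cons(4) by (simp only: list.map prod_list.Cons)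
  qed
  obtain z where z: "z \<in> carrier_vec (n-1)" "scalar_prod z z = scalar_prod x x - (scalar_prod v x)^2"
    "scalar_prod x (A *\<^sub>v x) = e * (scalar_prod v x)^2 + scalar_prod z (A3 *\<^sub>v z)"
    using q Cons(5) by blast
  have IH: "scalar_prod z (A3 *\<^sub>v z) \<le> (if es = [] then 0 else Max (set es)) * scalar_prod z z"
    by (rule Cons(1)[OF A3 cp3 z(1)])
  have zz: "scalar_prod z z \<ge> 0" by (rule scalar_prod_self_nonneg)
  show ?case
  proof (cases "es = []")
    case True
    have "n - 1 = 0" using degree_monic_char_poly[OF A3(1)] cp3 True by simp
    then have "scalar_prod z z = 0" using z(1) by (simp add: scalar_prod_def)
    then show ?thesis using z IH True by simp
  next
    case False
    define M where "M = Max (set (e # es))"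
    have M1: "e \<le> M" unfolding M_def by simp
    have M2: "Max (set es) \<le> M" unfolding M_def using False by (simp add: Max_insert)
    have "scalar_prod x (A *\<^sub>v x) \<le> e * (scalar_prod v x)^2 + Max (set es) * scalar_prod z z"
      using z(3) IH False by simp
    also have "\<dots> \<le> M * (scalar_prod v x)^2 + M * scalar_prod z z"
      by (intro add_mono mult_right_mono M1 M2 zz) simp
    also have "\<dots> = M * scalar_prod x x" using z(2) by (simp add: distrib_left[symmetric])
    finally show ?thesis unfolding M_def by simp
  qed
qed

definition Qf :: "nat \<Rightarrow> (nat \<Rightarrow> nat \<Rightarrow> bool) \<Rightarrow> (nat \<Rightarrow> real) \<Rightarrow> real" where
  "Qf n E f = (\<Sum>i<n. \<Sum>j<n. if E i j then f i * f j else 0)"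

lemma adj_carrier: "adj_matrix n E \<in> carrier_mat n n"
  by (simp add: adj_matrix_def)

lemma adj_sym: "simple_graph n E \<Longrightarrow> transpose_mat (adj_matrix n E) = adj_matrix n E"
  by (rule eq_matI) (auto simp: adj_matrix_def simple_graph_def)

lemma vec_quad: "v \<in> carrier_vec n \<Longrightarrow> scalar_prod v (adj_matrix n E *\<^sub>v Matrix.vec n f) =
   (\<Sum>i<n. \<Sum>j<n. if E i j then vec_index v i * f j else 0)"
proof -
  assume v: "v \<in> carrier_vec n"
  have "scalar_prod v (adj_matrix n E *\<^sub>v Matrix.vec n f) =
     (\<Sum>i<n. vec_index v i * vec_index (adj_matrix n E *\<^sub>v Matrix.vec n f) i)"
    using v adj_carrier[of n E] by (simp add: scalar_prod_sum[of _ n])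
  also have "\<dots> = (\<Sum>i<n. \<Sum>j<n. if E i j then vec_index v i * f j else 0)"
  proof (rule sum.cong[OF refl])
    fix i assume i: "i \<in> {..<n}"
    have r: "Matrix.row (adj_matrix n E) i \<in> carrier_vec n" by (simp add: adj_matrix_def row_def)
    have "vec_index (adj_matrix n E *\<^sub>v Matrix.vec n f) i = (\<Sum>j<n. (if E i j then 1 else 0) * f j)"
      using i by (simp add: adj_matrix_def scalar_prod_sum[of _ n])
    then show "vec_index v i * vec_index (adj_matrix n E *\<^sub>v Matrix.vec n f) i =
        (\<Sum>j<n. if E i j then vec_index v i * f j else 0)"
      by (simp add: sum_distrib_left) (intro sum.cong refl, simp)
  qed
  finally show ?thesis .
qed

lemma adj_quad: "scalar_prod (Matrix.vec n f) (adj_matrix n E *\<^sub>v Matrix.vec n f) = Qf n E f"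
  unfolding Qf_def by (subst vec_quad) (auto intro!: sum.cong)

lemma adj_eig:
  assumes sg: "simple_graph n E" and n: "n \<ge> 2"
  shows "\<exists>v. (\<Sum>i<n. (v i)^2) = 1 \<and> Qf n E v = adj_eigenvalues n E ! 0 \<and>
   (\<forall>f. Qf n E f \<le> adj_eigenvalues n E ! 0 * (\<Sum>i<n. v i * f i)^2
        + lambda_graph n E * ((\<Sum>i<n. (f i)^2) - (\<Sum>i<n. v i * f i)^2))"
proof -
  define A where "A = adj_matrix n E"
  define es where "es = adj_eigenvalues n E"
  have A: "A \<in> carrier_mat n n" unfolding A_def by (rule adj_carrier)
  have sym: "transpose_mat A = A" unfolding A_def by (rule adj_sym[OF sg])
  have es: "length es = n \<and> sorted_wrt (\<ge>) es \<and> char_poly A = (\<Prod>a\<leftarrow>es. [:- a, 1:])"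
    unfolding es_def adj_eigenvalues_def A_def[symmetric] by (rule theI'[OF sym_eigenlist[OF A sym]])
  obtain e es' where ees: "es = e # es'" using es n by (cases es) auto
  have ne: "es' \<noteq> []" using es n ees by auto
  have e0: "es ! 0 = e" using ees by simp
  have e1: "es ! 1 = hd es'" using ne ees by (cases es') auto
  have srt': "sorted_wrt (\<ge>) es'" using es ees by simp
  have Mx: "Max (set es') = es ! 1" using sorted_desc_hd_Max[OF srt' ne] e1 by simp
  have lam: "es ! 1 \<le> lambda_graph n E"
    unfolding lambda_graph_def es_def[symmetric] Let_def by simp
  have root: "poly (char_poly A) e = 0" using es ees by simp
  obtain v A3 where v: "v \<in> carrier_vec n" "scalar_prod v v = 1" "A *\<^sub>v v = e \<cdot>\<^sub>v v"
    and A3: "A3 \<in> carrier_mat (n-1) (n-1)" "transpose_mat A3 = A3"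
    and cp: "char_poly A = [:-e,1:] * char_poly A3"
    and q: "\<forall>x\<in>carrier_vec n. \<exists>z\<in>carrier_vec (n-1). scalar_prod z z = scalar_prod x x - (scalar_prod v x)^2 \<and>
         scalar_prod x (A *\<^sub>v x) = e * (scalar_prod v x)^2 + scalar_prod z (A3 *\<^sub>v z)"
    using sym_deflate[OF A sym root] by blast
  have cp3: "char_poly A3 = (\<Prod>a\<leftarrow>es'. [:- a, 1:])"
  proof (rule lin_cancel[of e])
    show "[:-e,1:] * char_poly A3 = [:-e,1:] * (\<Prod>a\<leftarrow>es'. [:- a, 1:])"
      using cp es ees by (simp only: list.map prod_list.Cons)
  qed
  have bound: "scalar_prod x (A *\<^sub>v x) \<le> e * (scalar_prod v x)^2 + lambda_graph n E * (scalar_prod x x - (scalar_prod v x)^2)"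
    if x: "x \<in> carrier_vec n" for x
  proof -
    obtain z where z: "z \<in> carrier_vec (n-1)" "scalar_prod z z = scalar_prod x x - (scalar_prod v x)^2"
      "scalar_prod x (A *\<^sub>v x) = e * (scalar_prod v x)^2 + scalar_prod z (A3 *\<^sub>v z)"
      using q x by blast
    have "scalar_prod z (A3 *\<^sub>v z) \<le> Max (set es') * scalar_prod z z"
      using quad_le_max[OF A3 cp3 z(1)] ne by simp
    also have "\<dots> \<le> lambda_graph n E * scalar_prod z z"
      using Mx lam scalar_prod_self_nonneg[of z] by (simp add: mult_right_mono)
    finally show ?thesis using z by simp
  qed
  define vf where "vf i = vec_index v i" for i
  have vvec: "v = Matrix.vec n vf" using v(1) by (auto simp: vf_def)
  have "(\<Sum>i<n. (vf i)^2) = 1" using v(2) v(1) by (simp add: scalar_prod_sum[of _ n] vf_def power2_eq_square)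
  moreover have "Qf n E vf = es ! 0"
  proof -
    have "Qf n E vf = scalar_prod v (A *\<^sub>v v)" using adj_quad[of n vf E] vvec by (simp add: A_def)
    also have "\<dots> = e" using v by simp
    finally show ?thesis using e0 by simp
  qed
  moreover have "Qf n E f \<le> es ! 0 * (\<Sum>i<n. vf i * f i)^2
        + lambda_graph n E * ((\<Sum>i<n. (f i)^2) - (\<Sum>i<n. vf i * f i)^2)" for f
  proof -
    have x: "Matrix.vec n f \<in> carrier_vec n" by simp
    have a: "scalar_prod v (Matrix.vec n f) = (\<Sum>i<n. vf i * f i)"
      using v(1) by (simp add: scalar_prod_sum[of _ n] vf_def)
    have xx: "scalar_prod (Matrix.vec n f) (Matrix.vec n f) = (\<Sum>i<n. (f i)^2)"
      by (simp add: scalar_prod_sum[of _ n] power2_eq_square)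
    show ?thesis using bound[OF x] adj_quad[of n f E] a xx e0 by (simp add: A_def)
  qed
  ultimately show ?thesis unfolding es_def by blast
qed

lemma nbrs_eq: "nbrs n E i = {j\<in>{..<n}. E i j}"
  by (auto simp: nbrs_def)

lemma finite_nbrs[simp]: "finite (nbrs n E i)"
  by (simp add: nbrs_def)

lemma count_sum: "(\<Sum>j<n. if E i j then (1::real) else 0) = real (deg n E i)"
proof -
  have "(\<Sum>j<n. if E i j then (1::real) else 0) = (\<Sum>j\<in>{j\<in>{..<n}. E i j}. 1)"
    by (rule sum.inter_filter[symmetric]) simp
  also have "\<dots> = real (card {j\<in>{..<n}. E i j})" by simp
  finally show ?thesis by (simp add: deg_def nbrs_eq)
qed

lemma deg_le_max: "v < n \<Longrightarrow> deg n E v \<le> max_deg n E"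
  unfolding max_deg_def by (rule Max_ge) auto

lemma deg_ge_min: "v < n \<Longrightarrow> min_deg n E \<le> deg n E v"
  unfolding min_deg_def by (rule Min_le) auto

lemma Qf_le_maxdeg:
  assumes sg: "simple_graph n E"
  shows "Qf n E v \<le> real (max_deg n E) * (\<Sum>i<n. (v i)^2)"
proof -
  have symE: "E i j = E j i" for i j using sg unfolding simple_graph_def by blast
  have "Qf n E v \<le> (\<Sum>i<n. \<Sum>j<n. if E i j then ((v i)^2 + (v j)^2) / 2 else 0)"
    unfolding Qf_def
  proof (intro sum_mono)
    fix i j
    have "v i * v j \<le> ((v i)^2 + (v j)^2) / 2"
      using sum_squares_bound[of "v i" "v j"] by (simp add: power2_eq_square field_simps)
    then show "(if E i j then v i * v j else 0) \<le> (if E i j then ((v i)^2 + (v j)^2) / 2 else 0)" by simp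
  qed
  also have "\<dots> = (\<Sum>i<n. \<Sum>j<n. if E i j then (v i)^2 / 2 else 0) + (\<Sum>i<n. \<Sum>j<n. if E i j then (v j)^2 / 2 else 0)"
    by (simp add: sum.distrib[symmetric] add_divide_distrib if_distrib cong: if_cong)
  also have "(\<Sum>i<n. \<Sum>j<n. if E i j then (v j)^2 / 2 else 0) = (\<Sum>j<n. \<Sum>i<n. if E j i then (v j)^2 / 2 else 0)"
    by (subst sum.swap) (simp add: symE)
  also have "(\<Sum>i<n. \<Sum>j<n. if E i j then (v i)^2 / 2 else 0) = (\<Sum>i<n. real (deg n E i) * (v i)^2 / 2)"
  proof (rule sum.cong[OF refl])
    fix i
    have "(\<Sum>j<n. if E i j then (v i)^2 / 2 else 0) = (\<Sum>j<n. (if E i j then 1 else 0) * ((v i)^2 / 2))"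
      by (intro sum.cong refl) simp
    also have "\<dots> = (\<Sum>j<n. if E i j then 1 else 0) * ((v i)^2 / 2)" by (rule sum_distrib_right[symmetric])
    also have "\<dots> = real (deg n E i) * (v i)^2 / 2" using count_sum[where n=n and E=E and i=i] by simp
    finally show "(\<Sum>j<n. if E i j then (v i)^2 / 2 else 0) = real (deg n E i) * (v i)^2 / 2" .
  qed
  also have "(\<Sum>i<n. real (deg n E i) * (v i)^2 / 2) + (\<Sum>i<n. real (deg n E i) * (v i)^2 / 2)
      = (\<Sum>i<n. real (deg n E i) * (v i)^2)" by (simp add: sum.distrib[symmetric])
  also have "\<dots> \<le> (\<Sum>i<n. real (max_deg n E) * (v i)^2)"
    by (intro sum_mono mult_right_mono) (auto simp: deg_le_max)
  finally show ?thesis by (simp add: sum_distrib_left)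
qed


lemma lambda_nonneg: "lambda_graph n E \<ge> 0"
  unfolding lambda_graph_def Let_def by simp

lemma Qf_ones: "Qf n E (\<lambda>_. 1) = (\<Sum>i<n. real (deg n E i))"
  unfolding Qf_def using count_sum by (intro sum.cong refl) (simp add: if_distrib cong: if_cong)

lemma Qf_ind:
  assumes J: "J \<subseteq> {..<n}"
  shows "Qf n E (\<lambda>i. if i \<in> J then 1 else 0) = (\<Sum>i\<in>J. real (card (nbrs n E i \<inter> J)))"
proof -
  have "Qf n E (\<lambda>i. if i \<in> J then 1 else 0) = (\<Sum>i<n. if i \<in> J then (\<Sum>j<n. if E i j \<and> j \<in> J then 1 else 0) else 0)"
    unfolding Qf_def
  proof (intro sum.cong refl)
    fix i
    show "(\<Sum>j<n. if E i j then (if i \<in> J then 1 else 0) * (if j \<in> J then 1 else 0) else 0) =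
        (if i \<in> J then (\<Sum>j<n. if E i j \<and> j \<in> J then 1 else 0) else (0::real))"
      by (cases "i \<in> J") (auto intro!: sum.cong)
  qed
  also have "\<dots> = (\<Sum>i\<in>J. (\<Sum>j<n. if E i j \<and> j \<in> J then (1::real) else 0))"
    using J by (simp add: sum.inter_filter[symmetric] Int_absorb1 subset_eq) (metis (no_types, lifting) Collect_mem_eq Collect_cong lessThan_iff subset_eq J)
  also have "\<dots> = (\<Sum>i\<in>J. real (card (nbrs n E i \<inter> J)))"
  proof (rule sum.cong[OF refl])
    fix i
    have "(\<Sum>j<n. if E i j \<and> j \<in> J then (1::real) else 0) = (\<Sum>j\<in>{j\<in>{..<n}. E i j \<and> j \<in> J}. 1)"
      by (rule sum.inter_filter[symmetric]) simp
    also have "{j\<in>{..<n}. E i j \<and> j \<in> J} = nbrs n E i \<inter> J" by (auto simp: nbrs_def)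
    finally show "(\<Sum>j<n. if E i j \<and> j \<in> J then (1::real) else 0) = real (card (nbrs n E i \<inter> J))" by simp
  qed
  finally show ?thesis .
qed

lemma small_set_internal:
  assumes sg: "simple_graph n E" and n: "n \<ge> 2" and gap: "lambda_graph n E < real (max_deg n E)"
    and J: "J \<subseteq> {..<n}"
  shows "(\<Sum>i\<in>J. real (card (nbrs n E i \<inter> J))) \<le>
    real (max_deg n E) * (2 * (real (card J))^2 / n + 2 * real (card J) * (real (max_deg n E) - real (min_deg n E)) / (real (max_deg n E) - lambda_graph n E))
     + lambda_graph n E * real (card J)"
proof -
  define D where "D = real (max_deg n E)"
  define d where "d = real (min_deg n E)"
  define lam where "lam = lambda_graph n E"
  define k where "k = real (card J)"
  have lam0: "lam \<ge> 0" unfolding lam_def by (rule lambda_nonneg)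
  have Dl: "D - lam > 0" using gap by (simp add: D_def lam_def)
  have D0: "D \<ge> 0" by (simp add: D_def)
  have nr: "real n > 0" using n by simp
  obtain v where v1: "(\<Sum>i<n. (v i)^2) = 1" and Qv: "Qf n E v = adj_eigenvalues n E ! 0"
    and bnd: "\<And>f. Qf n E f \<le> adj_eigenvalues n E ! 0 * (\<Sum>i<n. v i * f i)^2
        + lam * ((\<Sum>i<n. (f i)^2) - (\<Sum>i<n. v i * f i)^2)"
    using adj_eig[OF sg n] unfolding lam_def by blast
  define mu where "mu = adj_eigenvalues n E ! 0"
  have muD: "mu \<le> D" using Qf_le_maxdeg[OF sg, of v] v1 Qv by (simp add: mu_def D_def)
  define a where "a = (\<Sum>i<n. v i)"
  have a2n: "a^2 \<le> real n"
    using sum_squared_le_sum_of_squares[of v "{..<n}"] v1 by (simp add: a_def)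
  have Q1: "real n * d \<le> Qf n E (\<lambda>_. 1)"
  proof -
    have "(\<Sum>i<n. d) \<le> (\<Sum>i<n. real (deg n E i))"
      by (intro sum_mono) (simp add: d_def deg_ge_min)
    then show ?thesis by (simp add: Qf_ones)
  qed
  have b1: "Qf n E (\<lambda>_. 1) \<le> mu * a^2 + lam * (real n - a^2)"
    using bnd[of "\<lambda>_. 1"] by (simp add: a_def mu_def)
  have "mu * a^2 \<le> D * a^2" using muD by (simp add: mult_right_mono)
  then have "(real n - a^2) * (D - lam) \<le> real n * (D - d)"
    using Q1 b1 by (simp add: algebra_simps)
  then have eta: "real n - a^2 \<le> real n * (D - d) / (D - lam)"
    using Dl by (simp add: field_simps)
  define f where "f i = (if i \<in> J then (1::real) else 0)" for i
  define b where "b = (\<Sum>i\<in>J. v i)"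
  have finJ: "finite J" using J finite_subset by blast
  have bf: "(\<Sum>i<n. v i * f i) = b"
  proof -
    have "(\<Sum>i<n. v i * f i) = (\<Sum>i<n. if i \<in> J then v i else 0)" by (intro sum.cong refl) (simp add: f_def)
    also have "\<dots> = b" unfolding b_def using J by (simp add: sum.If_cases Int_absorb1 Int_absorb2)
    finally show ?thesis .
  qed
  have ff: "(\<Sum>i<n. (f i)^2) = k"
  proof -
    have "(\<Sum>i<n. (f i)^2) = (\<Sum>i<n. if i \<in> J then 1 else 0)" by (intro sum.cong refl) (simp add: f_def)
    also have "\<dots> = k" unfolding k_def using J by (simp add: sum.If_cases Int_absorb1 Int_absorb2)
    finally show ?thesis .
  qed
  have QJ: "(\<Sum>i\<in>J. real (card (nbrs n E i \<inter> J))) \<le> D * b^2 + lam * k"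
  proof -
    have "(\<Sum>i\<in>J. real (card (nbrs n E i \<inter> J))) = Qf n E f" using Qf_ind[OF J] by (simp add: f_def[abs_def])
    also have "\<dots> \<le> mu * b^2 + lam * (k - b^2)" using bnd[of f] bf ff by (simp add: mu_def)
    also have "\<dots> \<le> D * b^2 + lam * k"
    proof -
      have "mu * b^2 \<le> D * b^2" using muD by (simp add: mult_right_mono)
      moreover have "lam * b^2 \<ge> 0" using lam0 by simp
      ultimately show ?thesis by (simp add: algebra_simps)
    qed
    finally show ?thesis .
  qed
  define c where "c = a / real n"
  have bsplit: "b = c * k + (\<Sum>i\<in>J. v i - c)"
    unfolding b_def k_def by (simp add: sum_subtractf)
  have sq: "(\<Sum>i\<in>J. v i - c)^2 \<le> k * ((real n - a^2) / real n)"
  proof -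
    have "(\<Sum>i\<in>J. v i - c)^2 \<le> (\<Sum>i\<in>J. (v i - c)^2) * k"
      using sum_squared_le_sum_of_squares[of "\<lambda>i. v i - c" J] by (simp add: k_def)
    also have "(\<Sum>i\<in>J. (v i - c)^2) \<le> (\<Sum>i<n. (v i - c)^2)"
      by (rule sum_mono2) (use J in auto)
    also have "(\<Sum>i<n. (v i - c)^2) = (\<Sum>i<n. (v i)^2) - 2 * c * a + real n * c^2"
      by (simp add: power2_diff sum.distrib sum_subtractf sum_distrib_left a_def mult_ac)
    also have "\<dots> = (real n - a^2) / real n"
      using v1 nr by (simp add: c_def field_simps power2_eq_square)
    finally show ?thesis using k_def by (simp add: mult_right_mono mult.commute)
  qed
  have ck: "(c * k)^2 \<le> k^2 / real n"
  proof -
    have "(c * k)^2 = a^2 * k^2 / (real n)^2" by (simp add: c_def power_mult_distrib power_divide)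
    also have "\<dots> \<le> real n * k^2 / (real n)^2"
      by (intro divide_right_mono mult_right_mono a2n) auto
    also have "\<dots> = k^2 / real n" using nr by (simp add: power2_eq_square)
    finally show ?thesis .
  qed
  have b2: "b^2 \<le> 2 * k^2 / real n + 2 * k * (D - d) / (D - lam)"
  proof -
    have "b^2 \<le> 2 * (c * k)^2 + 2 * (\<Sum>i\<in>J. v i - c)^2"
      unfolding bsplit using sum_squares_bound[of "c*k" "\<Sum>i\<in>J. v i - c"]
      by (simp add: power2_sum algebra_simps)
    also have "\<dots> \<le> 2 * (k^2 / real n) + 2 * (k * ((real n - a^2) / real n))"
      using ck sq by simp
    also have "k * ((real n - a^2) / real n) \<le> k * ((D - d) / (D - lam))"
    proof (rule mult_left_mono)
      show "(real n - a^2) / real n \<le> (D - d) / (D - lam)" using eta nr by (simp add: field_simps)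
    qed (simp add: k_def)
    finally show ?thesis by simp
  qed
  have "D * b^2 \<le> D * (2 * k^2 / real n + 2 * k * (D - d) / (D - lam))"
    by (rule mult_left_mono[OF b2 D0])
  then show ?thesis using QJ unfolding D_def d_def lam_def k_def by simp
qed

lemma next_sub: "I \<subseteq> next_informed P n I c"
  by (cases P) auto

lemma set_choice: "x \<in> set_pmf (choice_pmf n E q v) \<Longrightarrow> fst x = Some u \<Longrightarrow> u \<in> nbrs n E v"
proof -
  have "finite (nbrs n E v)" by (simp add: nbrs_def)
  then show "x \<in> set_pmf (choice_pmf n E q v) \<Longrightarrow> fst x = Some u \<Longrightarrow> u \<in> nbrs n E v"
    unfolding choice_pmf_def by (auto split: if_splits simp: set_pmf_of_set)
qed

lemma set_round: "c \<in> set_pmf (round_choices n E q) \<Longrightarrow> v < n \<Longrightarrow> c v \<in> set_pmf (choice_pmf n E q v)"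
  unfolding round_choices_def using set_Pi_pmf_subset'[of "{..<n}" "(None, False)" "choice_pmf n E q"]
  by (auto simp: PiE_dflt_def)

lemma next_bound:
  assumes "c \<in> set_pmf (round_choices n E q)" "I \<subseteq> {..<n}"
  shows "next_informed P n I c \<subseteq> {..<n}"
proof -
  have "u < n" if "v < n" "c v = (Some u, True)" for u v
    using set_choice[OF set_round[OF assms(1) that(1)], of u] that(2) by (auto simp: nbrs_def)
  then show ?thesis using assms(2) by (cases P) auto
qed

lemma run_support:
  assumes "S \<subseteq> {..<n}" "J \<in> set_pmf (rumour_run P n E q k S)"
  shows "S \<subseteq> J \<and> J \<subseteq> {..<n}"
  using assms(2)
proof (induct k arbitrary: J)
  case 0
  then show ?case using assms(1) by simp
next
  case (Suc k)
  then obtain I c where I: "I \<in> set_pmf (rumour_run P n E q k S)" and c: "c \<in> set_pmf (round_choices n E q)"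
    and J: "J = next_informed P n I c"
    by (auto simp: rumour_round_def)
  have "S \<subseteq> I \<and> I \<subseteq> {..<n}" using Suc(1)[OF I] .
  then show ?case using J next_sub[of I P n c] next_bound[OF c, of I P] by blast
qed

definition Psi :: "nat \<Rightarrow> nat set \<Rightarrow> ennreal" where
  "Psi m J = (if card J < m then ennreal ((1/2) ^ card J) else 0)"

lemma half_split: "ennreal ((1/2)^k) = ennreal ((1/2) ^ Suc k) + ennreal ((1/2) ^ Suc k)"
  by (simp add: ennreal_plus[symmetric] del: ennreal_plus)

lemma int_const_ind:
  "(\<integral>\<^sup>+J. h + h * indicator A J \<partial>measure_pmf M) = h + h * emeasure (measure_pmf M) A"
  by (simp add: nn_integral_add nn_integral_cmult_indicator measure_pmf.emeasure_space_1)

lemma emeasure_compl_le: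
  "emeasure (measure_pmf M) {J. card J < k + 1} = ennreal (1 - measure_pmf.prob M {J. k + 1 \<le> card J})"
proof -
  have seteq: "{J. card J < k + 1} = UNIV - {J. k + 1 \<le> card J}" by auto
  have "measure_pmf.prob M {J. card J < k + 1} = measure_pmf.prob M (UNIV - {J. k + 1 \<le> card J})"
    by (simp only: seteq)
  also have "\<dots> = 1 - measure_pmf.prob M {J. k + 1 \<le> card J}"
    using measure_pmf.prob_compl[of "{J. k + 1 \<le> card J}" M] by simp
  finally have "measure_pmf.prob M {J. card J < k + 1} = 1 - measure_pmf.prob M {J. k + 1 \<le> card J}" .
  then show ?thesis by (simp add: measure_pmf.emeasure_eq_measure)
qed

lemma final_arith:
  fixes p x :: real
  assumes "0 \<le> p" "p \<le> 1" "p \<le> x" "x \<le> 1" "ps = ennreal ((1/2)^k)"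
  shows "ennreal ((1/2) ^ Suc k) + ennreal ((1/2) ^ Suc k) * ennreal (1 - x) \<le> ennreal (1 - p/2) * ps"
proof -
  have "ennreal ((1/2) ^ Suc k) + ennreal ((1/2) ^ Suc k) * ennreal (1 - x)
      = ennreal ((1/2) ^ Suc k + (1/2) ^ Suc k * (1 - x))"
    using assms by (simp add: ennreal_mult[symmetric] ennreal_plus[symmetric] del: ennreal_plus)
  also have "\<dots> \<le> ennreal ((1 - p/2) * (1/2)^k)"
  proof (rule ennreal_leI)
    define t :: real where "t = (1/2)^k"
    have ts: "(1/2::real) ^ Suc k = t / 2" by (simp add: t_def)
    have "t / 2 * (1 - x) \<le> t / 2 * (1 - p)"
      by (rule mult_left_mono) (use assms in \<open>auto simp: t_def\<close>)
    moreover have "(1 - p/2) * t = t/2 + t/2 * (1 - p)" by (simp add: field_simps)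
    ultimately show "(1/2::real) ^ Suc k + (1/2) ^ Suc k * (1 - x) \<le> (1 - p/2) * (1/2)^k"
      unfolding ts t_def[symmetric] by linarith
  qed
  also have "\<dots> = ennreal (1 - p/2) * ps" using assms by (simp add: ennreal_mult)
  finally show ?thesis .
qed

lemma round_bound:
  assumes I: "I \<subseteq> {..<n}" and p: "0 \<le> p" "p \<le> 1"
    and grow: "card I < m \<Longrightarrow> measure_pmf.prob (rumour_round P n E q I) {J. card I + 1 \<le> card J} \<ge> p"
  shows "(\<integral>\<^sup>+J. Psi m J \<partial>rumour_round P n E q I) \<le> ennreal (1 - p/2) * Psi m I"
proof -
  let ?M = "rumour_round P n E q I"
  have supp: "I \<subseteq> J \<and> finite J" if "J \<in> set_pmf ?M" for J
  proof -
    have "J \<in> next_informed P n I ` set_pmf (round_choices n E q)"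
      using that by (simp add: rumour_round_def)
    then obtain c where c: "c \<in> set_pmf (round_choices n E q)" and J: "J = next_informed P n I c"
      by blast
    show ?thesis using J next_sub[of I P n c] next_bound[OF c I, of P] finite_subset by blast
  qed
  show ?thesis
  proof (cases "card I < m")
    case False
    have "(\<integral>\<^sup>+J. Psi m J \<partial>?M) = (\<integral>\<^sup>+J. 0 \<partial>?M)"
    proof (rule nn_integral_cong_AE, rule AE_pmfI)
      fix J assume "J \<in> set_pmf ?M"
      then have "card I \<le> card J" using supp card_mono by blast
      then show "Psi m J = 0" using False by (simp add: Psi_def)
    qed
    then show ?thesis by simp
  next
    case True
    define k where "k = card I"
    define h :: ennreal where "h = ennreal ((1/2) ^ Suc k)"
    have bnd: "Psi m J \<le> h + h * indicator {J. card J < card I + 1} J" if "J \<in> set_pmf ?M" for J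
    proof (cases "card J < card I + 1")
      case True
      have "card I \<le> card J" using supp[OF that] card_mono by blast
      then have "card J = k" using True k_def by simp
      then have "Psi m J \<le> ennreal ((1/2)^k)" by (simp add: Psi_def)
      also have "ennreal ((1/2)^k) = h + h" unfolding h_def by (rule half_split)
      finally show ?thesis using True by simp
    next
      case False
      have "Psi m J \<le> h"
      proof (cases "card J < m")
        case True
        have "(1/2::real) ^ card J \<le> (1/2) ^ Suc k"
          by (rule power_decreasing) (use False k_def in auto)
        then show ?thesis using True unfolding Psi_def h_def by (simp add: ennreal_leI)
      qed (simp add: Psi_def)
      then show ?thesis using False by simp
    qed
    have "(\<integral>\<^sup>+J. Psi m J \<partial>?M) \<le> (\<integral>\<^sup>+J. h + h * indicator {J. card J < card I + 1} J \<partial>?M)"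
      by (rule nn_integral_mono_AE, rule AE_pmfI, rule bnd)
    also have "\<dots> = h + h * emeasure ?M {J. card J < card I + 1}"
      by (rule int_const_ind)
    also have "emeasure ?M {J. card J < card I + 1} = ennreal (1 - measure_pmf.prob ?M {J. card I + 1 \<le> card J})"
      by (rule emeasure_compl_le)
    also have "h + h * ennreal (1 - measure_pmf.prob ?M {J. card I + 1 \<le> card J}) \<le> ennreal (1 - p/2) * Psi m I"
      unfolding h_def using True grow[OF True] p by (intro final_arith) (simp_all add: Psi_def k_def measure_pmf.prob_le_1)
    finally show ?thesis .
  qed
qed

lemma run_bound:
  assumes S: "S \<subseteq> {..<n}" and p: "0 \<le> p" "p \<le> 1"
    and grow: "\<And>I. S \<subseteq> I \<Longrightarrow> I \<subseteq> {..<n} \<Longrightarrow> card I < m \<Longrightarrow>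
        measure_pmf.prob (rumour_round P n E q I) {J. card I + 1 \<le> card J} \<ge> p"
  shows "(\<integral>\<^sup>+J. Psi m J \<partial>rumour_run P n E q k S) \<le> ennreal ((1 - p/2)^k) * Psi m S"
proof (induct k)
  case 0
  then show ?case by (simp add: nn_integral_return)
next
  case (Suc k)
  have "(\<integral>\<^sup>+J. Psi m J \<partial>rumour_run P n E q (Suc k) S)
      = (\<integral>\<^sup>+I. (\<integral>\<^sup>+J. Psi m J \<partial>rumour_round P n E q I) \<partial>rumour_run P n E q k S)"
    by (simp only: rumour_run.simps nn_integral_bind_pmf)
  also have "\<dots> \<le> (\<integral>\<^sup>+I. ennreal (1 - p/2) * Psi m I \<partial>rumour_run P n E q k S)"
  proof (rule nn_integral_mono_AE, rule AE_pmfI)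
    fix I assume I: "I \<in> set_pmf (rumour_run P n E q k S)"
    have sI: "S \<subseteq> I \<and> I \<subseteq> {..<n}" by (rule run_support[OF S I])
    have g: "card I < m \<Longrightarrow> measure_pmf.prob (rumour_round P n E q I) {J. card I + 1 \<le> card J} \<ge> p"
      using grow sI by blast
    have sI2: "I \<subseteq> {..<n}" using sI by blast
    show "(\<integral>\<^sup>+J. Psi m J \<partial>rumour_round P n E q I) \<le> ennreal (1 - p/2) * Psi m I"
      by (rule round_bound[OF sI2 p g])
  qed
  also have "\<dots> = ennreal (1 - p/2) * (\<integral>\<^sup>+I. Psi m I \<partial>rumour_run P n E q k S)"
    by (rule nn_integral_cmult) simp
  also have "\<dots> \<le> ennreal (1 - p/2) * (ennreal ((1 - p/2)^k) * Psi m S)"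
    by (rule mult_left_mono[OF Suc]) simp
  also have "\<dots> = ennreal ((1 - p/2)^Suc k) * Psi m S"
  proof -
    have "ennreal ((1 - p/2) * (1 - p/2)^k) = ennreal (1 - p/2) * ennreal ((1 - p/2)^k)"
      by (rule ennreal_mult) (use p in auto)
    then show ?thesis by (simp add: mult.assoc)
  qed
  finally show ?case .
qed

lemma prob_bound:
  assumes S: "S \<subseteq> {..<n}" and p: "0 \<le> p" "p \<le> 1"
    and grow: "\<And>I. S \<subseteq> I \<Longrightarrow> I \<subseteq> {..<n} \<Longrightarrow> card I < m \<Longrightarrow>
        measure_pmf.prob (rumour_round P n E q I) {J. card I + 1 \<le> card J} \<ge> p"
  shows "measure_pmf.prob (rumour_run P n E q k S) {J. card J < m} \<le> 2^m * (1 - p/2)^k"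
proof -
  let ?M = "rumour_run P n E q k S"
  have pt: "indicator {J. card J < m} J \<le> ennreal (2^m) * Psi m J" for J :: "nat set"
  proof (cases "card J < m")
    case True
    have "(1::real) \<le> 2^m * (1/2)^card J"
    proof -
      have "(2::real)^card J \<le> 2^m" using True by (intro power_increasing) auto
      then show ?thesis by (simp add: field_simps)
    qed
    then have "ennreal 1 \<le> ennreal (2^m * (1/2)^card J)" by (rule ennreal_leI)
    also have "\<dots> = ennreal (2^m) * ennreal ((1/2)^card J)" by (rule ennreal_mult) auto
    finally show ?thesis using True by (simp add: Psi_def)
  qed simp
  have "emeasure ?M {J. card J < m} = (\<integral>\<^sup>+J. indicator {J. card J < m} J \<partial>?M)"
    by (rule nn_integral_indicator[symmetric]) simp
  also have "\<dots> \<le> (\<integral>\<^sup>+J. ennreal (2^m) * Psi m J \<partial>?M)" by (rule nn_integral_mono) (rule pt)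
  also have "\<dots> = ennreal (2^m) * (\<integral>\<^sup>+J. Psi m J \<partial>?M)" by (rule nn_integral_cmult) simp
  also have "\<dots> \<le> ennreal (2^m) * (ennreal ((1 - p/2)^k) * Psi m S)"
    by (rule mult_left_mono[OF run_bound[OF S p grow]]) auto
  also have "\<dots> \<le> ennreal (2^m) * (ennreal ((1 - p/2)^k) * 1)"
  proof (intro mult_left_mono)
    show "Psi m S \<le> 1"
    proof (cases "card S < m")
      case True
      have "ennreal ((1/2)^card S) \<le> ennreal 1" by (rule ennreal_leI) (simp add: power_le_one)
      then show ?thesis using True by (simp add: Psi_def)
    qed (simp add: Psi_def)
  qed auto
  also have "\<dots> = ennreal (2^m * (1 - p/2)^k)"
    using ennreal_mult[of "2^m" "(1 - p/2)^k"] p by simp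
  finally have "ennreal (measure_pmf.prob ?M {J. card J < m}) \<le> ennreal (2^m * (1 - p/2)^k)"
    by (simp add: measure_pmf.emeasure_eq_measure)
  then show ?thesis using p by (simp add: ennreal_le_iff)
qed

lemma choice_nb:
  assumes "nbrs n E u \<noteq> {}"
  shows "choice_pmf n E q u = pair_pmf (map_pmf Some (pmf_of_set (nbrs n E u))) (bernoulli_pmf q)"
  using assms by (simp add: choice_pmf_def)

lemma round_component:
  assumes "i < n"
  shows "measure_pmf.prob (round_choices n E q) {c. c i \<in> T} = measure_pmf.prob (choice_pmf n E q i) T"
proof -
  have "map_pmf (\<lambda>f. f i) (round_choices n E q) = choice_pmf n E q i"
    unfolding round_choices_def using assms by (simp add: Pi_pmf_component)
  then have "measure_pmf.prob (map_pmf (\<lambda>f. f i) (round_choices n E q)) T = measure_pmf.prob (choice_pmf n E q i) T"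
    by simp
  then show ?thesis by (simp add: vimage_def)
qed

lemma push_prob:
  assumes q: "0 \<le> q" "q \<le> 1" and nb: "nbrs n E i \<noteq> {}" and U: "U \<subseteq> nbrs n E i"
  shows "measure_pmf.prob (choice_pmf n E q i) ((\<lambda>u. (Some u, True)) ` U) = q * card U / card (nbrs n E i)"
proof -
  have fin: "finite (nbrs n E i)" by (simp add: nbrs_def)
  have finU: "finite U" using U fin finite_subset by blast
  have se: "(\<lambda>u. (Some u, True)) ` U = (Some ` U) \<times> {True}" by auto
  have "measure_pmf.prob (choice_pmf n E q i) ((\<lambda>u. (Some u, True)) ` U)
     = measure_pmf.prob (pair_pmf (map_pmf Some (pmf_of_set (nbrs n E i))) (bernoulli_pmf q)) ((Some ` U) \<times> {True})"
    by (simp only: choice_nb[OF nb] se)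
  also have "\<dots> = measure_pmf.prob (map_pmf Some (pmf_of_set (nbrs n E i))) (Some ` U) * measure_pmf.prob (bernoulli_pmf q) {True}"
    by (rule measure_pmf_prob_product) (use finU in auto)
  also have "measure_pmf.prob (map_pmf Some (pmf_of_set (nbrs n E i))) (Some ` U) = card U / card (nbrs n E i)"
  proof -
    have "Some -` Some ` U = U" by auto
    then have "measure_pmf.prob (map_pmf Some (pmf_of_set (nbrs n E i))) (Some ` U) = measure_pmf.prob (pmf_of_set (nbrs n E i)) U"
      by simp
    also have "\<dots> = card (nbrs n E i \<inter> U) / card (nbrs n E i)" by (rule measure_pmf_of_set[OF nb fin])
    also have "nbrs n E i \<inter> U = U" using U by blast
    finally show ?thesis .
  qed
  also have "measure_pmf.prob (bernoulli_pmf q) {True} = q" using q by (simp add: measure_pmf_single)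
  finally show ?thesis by simp
qed

lemma pull_single:
  assumes q: "0 \<le> q" "q \<le> 1" and nb: "nbrs n E u \<noteq> {}" and i: "i \<in> nbrs n E u"
  shows "measure_pmf.prob (choice_pmf n E q u) (- {(Some i, True)}) = 1 - q / card (nbrs n E u)"
proof -
  have fin: "finite (nbrs n E u)" by (simp add: nbrs_def)
  have "measure_pmf.prob (choice_pmf n E q u) (- {(Some i, True)}) = 1 - measure_pmf.prob (choice_pmf n E q u) {(Some i, True)}"
    using measure_pmf.prob_compl[of "{(Some i, True)}" "choice_pmf n E q u"] by (simp add: Compl_eq_Diff_UNIV)
  also have "measure_pmf.prob (choice_pmf n E q u) {(Some i, True)} = pmf (choice_pmf n E q u) (Some i, True)"
    by (rule measure_pmf_single)
  also have "\<dots> = pmf (map_pmf Some (pmf_of_set (nbrs n E u))) (Some i) * pmf (bernoulli_pmf q) True"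
    by (simp add: choice_nb[OF nb] pmf_pair)
  also have "pmf (map_pmf Some (pmf_of_set (nbrs n E u))) (Some i) = pmf (pmf_of_set (nbrs n E u)) i"
    by (rule pmf_map_inj') simp
  also have "\<dots> = 1 / card (nbrs n E u)" using i nb fin by simp
  finally show ?thesis using q by simp
qed


lemma measure_mono_supp:
  assumes "\<And>c. c \<in> set_pmf M \<Longrightarrow> c \<in> A \<Longrightarrow> c \<in> B"
  shows "measure_pmf.prob M A \<le> measure_pmf.prob M B"
proof -
  have "measure_pmf.prob M A = measure_pmf.prob M (A \<inter> set_pmf M)" by (simp add: measure_Int_set_pmf)
  also have "\<dots> \<le> measure_pmf.prob M B"
    by (rule measure_pmf.finite_measure_mono) (use assms in auto)
  finally show ?thesis .
qed

lemma one_minus_exp: "1 - exp (- x) \<le> (x::real)"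
  using exp_ge_add_one_self[of "-x"] by simp

lemma grow_prob:
  assumes sg: "simple_graph n E" and q: "0 < q" "q \<le> 1" and I: "I \<subseteq> {..<n}" and i: "i \<in> I"
    and nb: "\<forall>u<n. nbrs n E u \<noteq> {}"
    and big: "\<forall>u<n. real (card (nbrs n E i - I)) \<ge> \<gamma> * real (deg n E u)" and g0: "0 \<le> \<gamma>"
  shows "measure_pmf.prob (rumour_round P n E q I) {J. card I + 1 \<le> card J} \<ge> 1 - exp (- q * \<gamma>)"
proof -
  define M where "M = round_choices n E q"
  define U where "U = nbrs n E i - I"
  define G where "G = {c. card I + 1 \<le> card (next_informed P n I c)}"
  have iN: "i < n" using I i by auto
  have finI: "finite I" using I finite_subset by blast
  have red: "measure_pmf.prob (rumour_round P n E q I) {J. card I + 1 \<le> card J} = measure_pmf.prob M G"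
    by (simp add: rumour_round_def M_def G_def vimage_def)
  have key: "c \<in> G" if c: "c \<in> set_pmf M" and u: "u \<notin> I" "u \<in> next_informed P n I c" for c u
  proof -
    have sub: "next_informed P n I c \<subseteq> {..<n}" using next_bound[OF c[unfolded M_def] I] .
    then have fin: "finite (next_informed P n I c)" using finite_subset by blast
    have "insert u I \<subseteq> next_informed P n I c" using u next_sub[of I P n c] by blast
    then have "card (insert u I) \<le> card (next_informed P n I c)" using fin card_mono by blast
    then show ?thesis using u finI by (simp add: G_def)
  qed
  have UN: "U \<subseteq> {..<n}" by (auto simp: U_def nbrs_def)
  have Unb: "U \<subseteq> nbrs n E i" by (auto simp: U_def)
  have finU: "finite U" using UN finite_subset by blast
  show ?thesis
  proof (cases "\<gamma> = 0")
    case True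
    then show ?thesis by simp
  next
    case False
    then have gpos: "\<gamma> > 0" using g0 by simp
    have degpos: "real (deg n E u) > 0" if "u < n" for u
      using nb that by (simp add: deg_def card_gt_0_iff nbrs_def)
    have cU: "real (card U) \<ge> \<gamma> * real (deg n E u)" if "u < n" for u using big that by (simp add: U_def)
    have Upos: "real (card U) > 0" using cU[OF iN] gpos degpos[OF iN] by (smt (verit) mult_pos_pos)
    have pushEv: "measure_pmf.prob M {c. c i \<in> (\<lambda>u. (Some u, True)) ` U} \<ge> 1 - exp (- q * \<gamma>)"
    proof -
      have "measure_pmf.prob M {c. c i \<in> (\<lambda>u. (Some u, True)) ` U} = q * card U / card (nbrs n E i)"
        unfolding M_def round_component[OF iN] using q nb iN Unb by (intro push_prob) auto
      also have "q * card U / card (nbrs n E i) \<ge> q * \<gamma>"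
      proof -
        have "q * \<gamma> * real (deg n E i) \<le> q * card U" using cU[OF iN] q by (simp add: mult.assoc mult_left_mono)
        then show ?thesis using degpos[OF iN] by (simp add: deg_def field_simps)
      qed
      finally show ?thesis using one_minus_exp[of "q * \<gamma>"] by (simp only: mult_minus_left)
    qed
    define B where "B u = (if u \<in> U then - {(Some i, True)} else UNIV)" for u
    have pullEv: "measure_pmf.prob M {c. \<exists>u\<in>U. c u = (Some i, True)} \<ge> 1 - exp (- q * \<gamma>)"
    proof -
      have ce: "{c. \<exists>u\<in>U. c u = (Some i, True)} = UNIV - Pi {..<n} B"
        using UN by (auto simp: B_def Pi_def)
      have "measure_pmf.prob M (Pi {..<n} B) = (\<Prod>u<n. measure_pmf.prob (choice_pmf n E q u) (B u))"
        unfolding M_def round_choices_def by (rule measure_Pi_pmf_Pi) simp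
      also have "\<dots> = (\<Prod>u<n. if u \<in> U then 1 - q / real (deg n E u) else 1)"
      proof (rule prod.cong[OF refl])
        fix u assume u: "u \<in> {..<n}"
        show "measure_pmf.prob (choice_pmf n E q u) (B u) = (if u \<in> U then 1 - q / real (deg n E u) else 1)"
        proof (cases "u \<in> U")
          case True
          have "i \<in> nbrs n E u" using True sg iN unfolding U_def nbrs_def simple_graph_def by auto
          then show ?thesis using True pull_single[of q n E u i] q nb u by (simp add: B_def deg_def)
        qed (simp add: B_def)
      qed
      also have "\<dots> = (\<Prod>u\<in>U. 1 - q / real (deg n E u))"
        using UN by (simp add: prod.If_cases Int_absorb1 Int_absorb2)
      also have "\<dots> \<le> (\<Prod>u\<in>U. exp (- (q / real (deg n E u))))"
      proof (rule prod_mono)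
        fix u assume u: "u \<in> U"
        have d: "real (deg n E u) \<ge> 1" using degpos[of u] u UN by auto
        have "q / real (deg n E u) \<le> 1" using q d by (simp add: field_simps)
        then show "0 \<le> 1 - q / real (deg n E u) \<and> 1 - q / real (deg n E u) \<le> exp (- (q / real (deg n E u)))"
          using exp_ge_add_one_self[of "- (q / real (deg n E u))"] by simp
      qed
      also have "\<dots> = exp (- (\<Sum>u\<in>U. q / real (deg n E u)))"
        by (simp add: exp_sum[OF finU, symmetric] sum_negf)
      also have "\<dots> \<le> exp (- (q * \<gamma>))"
      proof -
        have "(\<Sum>u\<in>U. q * (\<gamma> / real (card U))) \<le> (\<Sum>u\<in>U. q / real (deg n E u))"
        proof (rule sum_mono)
          fix u assume u: "u \<in> U"
          have un: "u < n" using u UN by auto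
          have "\<gamma> / real (card U) \<le> 1 / real (deg n E u)"
            using cU[OF un] Upos degpos[OF un] by (simp add: field_simps)
          then show "q * (\<gamma> / real (card U)) \<le> q / real (deg n E u)"
            using q mult_left_mono[of "\<gamma> / real (card U)" "1 / real (deg n E u)" q] by simp
        qed
        moreover have "(\<Sum>u\<in>U. q * (\<gamma> / real (card U))) = q * \<gamma>" using Upos by simp
        ultimately show ?thesis by simp
      qed
      finally have "measure_pmf.prob M (Pi {..<n} B) \<le> exp (- (q * \<gamma>))" .
      moreover have "measure_pmf.prob M {c. \<exists>u\<in>U. c u = (Some i, True)} = 1 - measure_pmf.prob M (Pi {..<n} B)"
        unfolding ce using measure_pmf.prob_compl[of "Pi {..<n} B" M] by simp
      ultimately show ?thesis by simp
    qed
    have push_in: "c \<in> G" if c: "c \<in> set_pmf M" "c \<in> {c. c i \<in> (\<lambda>u. (Some u, True)) ` U}" and P: "P \<noteq> Pull" for c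
    proof -
      obtain u where u: "u \<in> U" "c i = (Some u, True)" using c(2) by auto
      have "u \<in> next_informed P n I c" using u i iN P by (cases P) auto
      then show ?thesis using key[OF c(1)] u by (auto simp: U_def)
    qed
    have pull_in: "c \<in> G" if c: "c \<in> set_pmf M" "c \<in> {c. \<exists>u\<in>U. c u = (Some i, True)}" and P: "P = Pull" for c
    proof -
      obtain u where u: "u \<in> U" "c u = (Some i, True)" using c(2) by auto
      have "u < n" using u UN by auto
      then have "u \<in> next_informed P n I c" using u i P by auto
      then show ?thesis using key[OF c(1)] u by (auto simp: U_def)
    qed
    show ?thesis
    proof (cases "P = Pull")
      case True
      have "measure_pmf.prob M {c. \<exists>u\<in>U. c u = (Some i, True)} \<le> measure_pmf.prob M G"
        by (rule measure_mono_supp) (use pull_in True in blast)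
      then show ?thesis using pullEv red by simp
    next
      case False
      have "measure_pmf.prob M {c. c i \<in> (\<lambda>u. (Some u, True)) ` U} \<le> measure_pmf.prob M G"
        by (rule measure_mono_supp) (use push_in False in blast)
      then show ?thesis using pushEv red by simp
    qed
  qed
qed

lemma conn_nbrs:
  assumes sg: "simple_graph n E" and conn: "connected_graph n E" and n: "n \<ge> 2" and v: "v < n"
  shows "nbrs n E v \<noteq> {}"
proof -
  obtain w where w: "w < n" "w \<noteq> v"
  proof (cases "v = 0")
    case True then show ?thesis using that[of 1] n by auto
  next
    case False then show ?thesis using that[of 0] n by auto
  qed
  have "(v, w) \<in> {(a, b). E a b}\<^sup>*" using conn v w(1) unfolding connected_graph_def by blast
  then obtain x where "(v, x) \<in> {(a, b). E a b}" using w(2) by (cases rule: converse_rtranclE) auto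
  then have "E v x" by simp
  then have "x \<in> nbrs n E v" using sg unfolding simple_graph_def nbrs_def by auto
  then show ?thesis by auto
qed

lemma deg_pos:
  assumes "simple_graph n E" "connected_graph n E" "n \<ge> 2" "v < n"
  shows "deg n E v \<ge> 1"
  using conn_nbrs[OF assms] by (simp add: deg_def Suc_le_eq card_gt_0_iff)

lemma min_deg_pos:
  assumes "simple_graph n E" "connected_graph n E" "n \<ge> 2"
  shows "min_deg n E \<ge> 1"
proof -
  have "\<forall>x\<in>deg n E ` {..<n}. 1 \<le> x" using deg_pos[OF assms] by auto
  moreover have "0 \<in> {..<n}" using assms(3) by simp
  then have "deg n E ` {..<n} \<noteq> {}" by blast
  ultimately show ?thesis unfolding min_deg_def by simp
qed

lemma deg_sub:
  assumes "\<forall>u v. H u v \<longrightarrow> G u v"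
  shows "deg n H v \<le> deg n G v"
  unfolding deg_def by (rule card_mono) (use assms in \<open>auto simp: nbrs_def\<close>)

lemma good_vertex:
  assumes sub: "\<forall>u v. H u v \<longrightarrow> G u v"
    and degH: "\<forall>v<n. real (deg n H v) \<ge> real (deg n G v) / 2"
    and J: "J \<subseteq> {..<n}" "J \<noteq> {}"
    and internal: "(\<Sum>i\<in>J. real (card (nbrs n G i \<inter> J))) \<le> real (card J) * real (min_deg n G) / 4"
  shows "\<exists>i\<in>J. real (card (nbrs n H i - J)) \<ge> real (min_deg n G) / 4"
proof (rule ccontr)
  define d where "d = real (min_deg n G)"
  assume "\<not> ?thesis"
  then have lt: "\<forall>i\<in>J. real (card (nbrs n H i - J)) < d / 4" by (auto simp: d_def)
  have finJ: "finite J" using J(1) finite_subset by blast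
  have "(\<Sum>i\<in>J. real (card (nbrs n H i - J))) < (\<Sum>i\<in>J. d / 4)"
    by (rule sum_strict_mono[OF finJ J(2)]) (use lt in auto)
  moreover have "(\<Sum>i\<in>J. d / 2 - real (card (nbrs n G i \<inter> J))) \<le> (\<Sum>i\<in>J. real (card (nbrs n H i - J)))"
  proof (rule sum_mono)
    fix i assume i: "i \<in> J"
    have iN: "i < n" using i J by auto
    have fin: "finite (nbrs n H i)" by (simp add: nbrs_def)
    have "card (nbrs n H i - J) = card (nbrs n H i) - card (nbrs n H i \<inter> J)"
      by (rule card_Diff_subset_Int) (use fin in auto)
    moreover have "card (nbrs n H i \<inter> J) \<le> card (nbrs n H i)" by (rule card_mono) (use fin in auto)
    moreover have "card (nbrs n H i \<inter> J) \<le> card (nbrs n G i \<inter> J)"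
      by (rule card_mono) (use sub in \<open>auto simp: nbrs_def\<close>)
    moreover have "d / 2 \<le> real (deg n H i)"
      using degH iN deg_ge_min[OF iN, of G] unfolding d_def by (smt (verit, best) divide_right_mono of_nat_le_iff)
    ultimately show "d / 2 - real (card (nbrs n G i \<inter> J)) \<le> real (card (nbrs n H i - J))"
      by (simp add: deg_def of_nat_diff)
  qed
  moreover have "(\<Sum>i\<in>J. d / 2 - real (card (nbrs n G i \<inter> J))) = real (card J) * d / 2 - (\<Sum>i\<in>J. real (card (nbrs n G i \<inter> J)))"
    by (simp add: sum_subtractf)
  ultimately show False using internal unfolding d_def[symmetric] by simp
qed

lemma arith_bound:
  fixes D d lam k nn :: real
  assumes d0: "d > 0" and Dd: "D \<le> 21/20 * d" and dD: "d \<le> D" and lam0: "0 \<le> lam" and lamD: "lam \<le> D / 20"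
    and k0: "0 \<le> k" and kn: "k \<le> nn / 40" and nn: "nn > 0"
  shows "D * (2 * k^2 / nn + 2 * k * (D - d) / (D - lam)) + lam * k \<le> k * d / 4"
proof -
  have D0: "D > 0" using d0 dD by simp
  have Dl: "D - lam > 0" using lamD D0 by simp
  have X: "(D - d) / (D - lam) \<le> 1/19"
    using Dl Dd lamD by (simp add: divide_le_eq)
  have k2: "k^2 / nn \<le> k / 40"
  proof -
    have "k * k \<le> k * (nn / 40)" by (rule mult_left_mono[OF kn k0])
    then show ?thesis using nn by (simp add: power2_eq_square divide_le_eq)
  qed
  have "2 * k * (D - d) / (D - lam) = 2 * k * ((D - d) / (D - lam))" by simp
  also have "\<dots> \<le> 2 * k * (1/19)" by (rule mult_left_mono[OF X]) (use k0 in simp)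
  finally have t2: "2 * k * (D - d) / (D - lam) \<le> 2 * k / 19" by simp
  have "D * (2 * k^2 / nn + 2 * k * (D - d) / (D - lam)) \<le> D * (2 * (k / 40) + 2 * k / 19)"
    by (rule mult_left_mono) (use k2 t2 D0 in auto)
  moreover have "lam * k \<le> D / 20 * k" by (rule mult_right_mono[OF lamD k0])
  moreover have "D * (2 * (k / 40) + 2 * k / 19) + D / 20 * k \<le> k * d / 4"
  proof -
    have "D * (2 * (k / 40) + 2 * k / 19) + D / 20 * k = k * (D * (1/10 + 2/19))" by (simp add: algebra_simps)
    also have "\<dots> \<le> k * (d / 4)"
    proof (rule mult_left_mono[OF _ k0])
      show "D * (1 / 10 + 2 / 19) \<le> d / 4" using Dd d0 by simp
    qed
    finally show ?thesis by simp
  qed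
  ultimately show ?thesis by linarith
qed


lemma good_n:
  fixes Gn Hn :: "nat \<Rightarrow> nat \<Rightarrow> bool"
  assumes sgG: "simple_graph n Gn" and conn: "connected_graph n Gn" and sgH: "simple_graph n Hn"
    and sub: "\<forall>u v. Hn u v \<longrightarrow> Gn u v"
    and degH: "\<forall>v<n. real (deg n Hn v) \<ge> (1/2 + eps) * real (deg n Gn v)" and eps: "0 < eps"
    and q: "0 < q" "q \<le> 1" and n2: "n \<ge> 2"
    and Dd: "real (max_deg n Gn) \<le> 21/20 * real (min_deg n Gn)"
    and lamD: "lambda_graph n Gn \<le> real (max_deg n Gn) / 20"
    and mn: "real m \<le> real n / 40"
    and S: "S \<subseteq> {..<n}" "S \<noteq> {}"
  shows "measure_pmf.prob (rumour_run P n Hn q k S) {J. card J < m} \<le> 2^m * (1 - (1 - exp (- q / 8)) / 2)^k"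
proof -
  define p where "p = 1 - exp (- q / 8)"
  have p: "0 \<le> p" "p \<le> 1" using q by (auto simp: p_def)
  define d where "d = real (min_deg n Gn)"
  define D where "D = real (max_deg n Gn)"
  define lam where "lam = lambda_graph n Gn"
  have d1: "d \<ge> 1" using min_deg_pos[OF sgG conn n2] by (simp add: d_def)
  have n0: "0 < n" using n2 by simp
  have dD: "d \<le> D" unfolding d_def D_def
    using deg_ge_min[OF n0, of Gn] deg_le_max[OF n0, of Gn] by simp
  have degH2: "\<forall>v<n. real (deg n Hn v) \<ge> real (deg n Gn v) / 2"
  proof (intro allI impI)
    fix v assume v: "v < n"
    have "real (deg n Gn v) / 2 \<le> (1/2 + eps) * real (deg n Gn v)" using eps by (simp add: algebra_simps)
    then show "real (deg n Hn v) \<ge> real (deg n Gn v) / 2" using degH v by force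
  qed
  have nbH: "\<forall>u<n. nbrs n Hn u \<noteq> {}"
  proof (intro allI impI)
    fix u assume u: "u < n"
    have "real (deg n Gn u) \<ge> 1" using deg_pos[OF sgG conn n2 u] by simp
    then have "real (deg n Hn u) > 0" using degH2 u by force
    then show "nbrs n Hn u \<noteq> {}" by (auto simp: deg_def)
  qed
  show ?thesis unfolding p_def[symmetric]
  proof (rule prob_bound[OF S(1) p])
    fix I assume I: "S \<subseteq> I" "I \<subseteq> {..<n}" "card I < m"
    have Ine: "I \<noteq> {}" using S(2) I(1) by blast
    have kn: "real (card I) \<le> real n / 40" using I(3) mn by simp
    have gap: "lambda_graph n Gn < real (max_deg n Gn)" using lamD d1 dD by (simp add: D_def d_def)
    have "(\<Sum>i\<in>I. real (card (nbrs n Gn i \<inter> I))) \<le>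
      D * (2 * (real (card I))^2 / real n + 2 * real (card I) * (D - d) / (D - lam)) + lam * real (card I)"
      using small_set_internal[OF sgG n2 gap I(2)] unfolding D_def d_def lam_def by simp
    also have "\<dots> \<le> real (card I) * d / 4"
      by (rule arith_bound) (use d1 Dd dD lamD kn n2 lambda_nonneg in \<open>auto simp: D_def d_def lam_def\<close>)
    finally have internal: "(\<Sum>i\<in>I. real (card (nbrs n Gn i \<inter> I))) \<le> real (card I) * real (min_deg n Gn) / 4"
      by (simp add: d_def)
    obtain i where i: "i \<in> I" and ci: "real (card (nbrs n Hn i - I)) \<ge> d / 4"
      using good_vertex[OF sub degH2 I(2) Ine internal] by (auto simp: d_def)
    have big: "\<forall>u<n. real (card (nbrs n Hn i - I)) \<ge> 1/8 * real (deg n Hn u)"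
    proof (intro allI impI)
      fix u assume u: "u < n"
      have "real (deg n Hn u) \<le> real (deg n Gn u)" using deg_sub[OF sub] by simp
      also have "\<dots> \<le> D" unfolding D_def using deg_le_max[OF u] by simp
      also have "\<dots> \<le> 21/20 * d" using Dd by (simp add: D_def d_def)
      finally have "1/8 * real (deg n Hn u) \<le> 21/160 * d" by simp
      also have "\<dots> \<le> d / 4" using d1 by simp
      finally show "real (card (nbrs n Hn i - I)) \<ge> 1/8 * real (deg n Hn u)" using ci by simp
    qed
    have "1 - exp (- q * (1/8)) \<le> measure_pmf.prob (rumour_round P n Hn q I) {J. card I + 1 \<le> card J}"
      by (rule grow_prob[OF sgH q I(2) i nbH big]) simp
    then show "p \<le> measure_pmf.prob (rumour_round P n Hn q I) {J. card I + 1 \<le> card J}"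
      by (simp add: p_def)
  qed
qed

lemma nat_ceiling_bounds:
  assumes "(x::real) \<ge> 0"
  shows "x \<le> real (nat \<lceil>x\<rceil>)" "real (nat \<lceil>x\<rceil>) \<le> x + 1"
proof -
  have c: "real (nat \<lceil>x\<rceil>) = real_of_int \<lceil>x\<rceil>" using assms by simp
  show "x \<le> real (nat \<lceil>x\<rceil>)" unfolding c by (rule le_of_int_ceiling)
  show "real (nat \<lceil>x\<rceil>) \<le> x + 1" unfolding c by linarith
qed

lemma less_nat_ceiling:
  assumes "(s::real) \<ge> 0"
  shows "(c < nat \<lceil>s\<rceil>) \<longleftrightarrow> real c < s"
proof -
  have "(c < nat \<lceil>s\<rceil>) \<longleftrightarrow> int c < \<lceil>s\<rceil>" using assms by linarith
  also have "\<dots> \<longleftrightarrow> real c < s" by (simp add: less_ceiling_iff)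
  finally show ?thesis .
qed

lemma tau_bnd:
  "eventually (\<lambda>n::nat. real (nat \<lceil>sqrt (ln (real n))\<rceil> * nat \<lceil>ln (real n) powr (1/4)\<rceil>) \<le> (sqrt (ln (real n)) + 1) * (ln (real n) powr (1/4) + 1)) sequentially"
  using eventually_ge_at_top[of "1::nat"]
proof (rule eventually_mono)
  fix n :: nat assume n: "1 \<le> n"
  have l0: "ln (real n) \<ge> 0" using n by simp
  have a: "real (nat \<lceil>sqrt (ln (real n))\<rceil>) \<le> sqrt (ln (real n)) + 1" by (rule nat_ceiling_bounds(2)) (use l0 in simp)
  have b: "real (nat \<lceil>ln (real n) powr (1/4)\<rceil>) \<le> ln (real n) powr (1/4) + 1" by (rule nat_ceiling_bounds(2)) simp
  have pw: "- 1 < ln (real n) powr (1/4)" using powr_ge_zero[of "ln (real n)" "1/4"] by linarith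
  have "real (nat \<lceil>sqrt (ln (real n))\<rceil>) * real (nat \<lceil>ln (real n) powr (1/4)\<rceil>) \<le> (sqrt (ln (real n)) + 1) * (ln (real n) powr (1/4) + 1)"
    by (intro mult_mono[OF a b]) (use l0 pw in auto)
  then show "real (nat \<lceil>sqrt (ln (real n))\<rceil> * nat \<lceil>ln (real n) powr (1/4)\<rceil>) \<le> (sqrt (ln (real n)) + 1) * (ln (real n) powr (1/4) + 1)"
    by (simp only: of_nat_mult)
qed

lemma tau_o: "(\<lambda>n::nat. real (nat \<lceil>sqrt (ln (real n))\<rceil> * nat \<lceil>ln (real n) powr (1/4)\<rceil>)) \<in> o(\<lambda>n. ln (real n))"
proof (rule landau_o.big_small_trans)
  show "(\<lambda>n::nat. real (nat \<lceil>sqrt (ln (real n))\<rceil> * nat \<lceil>ln (real n) powr (1/4)\<rceil>)) \<in> O(\<lambda>n. (sqrt (ln (real n)) + 1) * (ln (real n) powr (1/4) + 1))"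
  proof (rule bigoI[where c=1])
    show "\<forall>\<^sub>F n in sequentially. norm (real (nat \<lceil>sqrt (ln (real n))\<rceil> * nat \<lceil>ln (real n) powr (1/4)\<rceil>)) \<le> 1 * norm ((sqrt (ln (real n)) + 1) * (ln (real n) powr (1/4) + 1))"
      using tau_bnd eventually_ge_at_top[of "1::nat"]
    proof (rule eventually_elim2)
      fix n :: nat assume h: "real (nat \<lceil>sqrt (ln (real n))\<rceil> * nat \<lceil>ln (real n) powr (1/4)\<rceil>) \<le> (sqrt (ln (real n)) + 1) * (ln (real n) powr (1/4) + 1)"
        and n: "1 \<le> n"
      have l0: "ln (real n) \<ge> 0" using n by simp
      have nn: "0 \<le> (sqrt (ln (real n)) + 1) * (ln (real n) powr (1/4) + 1)" using l0 by simp
      show "norm (real (nat \<lceil>sqrt (ln (real n))\<rceil> * nat \<lceil>ln (real n) powr (1/4)\<rceil>)) \<le> 1 * norm ((sqrt (ln (real n)) + 1) * (ln (real n) powr (1/4) + 1))"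
        using h nn by (simp only: real_norm_def abs_of_nonneg of_nat_0_le_iff mult_1)
    qed
  qed
  show "(\<lambda>n. (sqrt (ln (real n)) + 1) * (ln (real n) powr (1/4) + 1)) \<in> o(\<lambda>n. ln (real n))"
    by real_asymp
qed

lemma L_fil: "filterlim (\<lambda>n::nat. nat \<lceil>ln (real n) powr (1/4)\<rceil>) at_top sequentially"
  unfolding filterlim_at_top
proof
  fix Z :: nat
  have f: "filterlim (\<lambda>n::nat. ln (real n) powr (1/4)) at_top sequentially" by real_asymp
  have "eventually (\<lambda>n. real Z \<le> ln (real n) powr (1/4)) sequentially"
    using f unfolding filterlim_at_top by blast
  then show "eventually (\<lambda>n. Z \<le> nat \<lceil>ln (real n) powr (1/4)\<rceil>) sequentially"
  proof (rule eventually_mono)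
    fix n assume Zn: "real Z \<le> ln (real n) powr (1/4)"
    have "ln (real n) powr (1/4) \<le> real (nat \<lceil>ln (real n) powr (1/4)\<rceil>)" by (rule nat_ceiling_bounds(1)) simp
    then have "real Z \<le> real (nat \<lceil>ln (real n) powr (1/4)\<rceil>)" using Zn by linarith
    then show "Z \<le> nat \<lceil>ln (real n) powr (1/4)\<rceil>" by simp
  qed
qed


lemma per_n:
  fixes Gn Hn :: "nat \<Rightarrow> nat \<Rightarrow> bool"
  assumes sgG: "simple_graph n Gn" and connG: "connected_graph n Gn" and sgH: "simple_graph n Hn"
    and subH: "\<forall>u v. Hn u v \<longrightarrow> Gn u v"
    and degH: "\<forall>v<n. real (deg n Hn v) \<ge> (1/2 + eps) * real (deg n Gn v)" and eps: "0 < eps"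
    and q: "0 < q" "q \<le> 1" and n3: "n \<ge> 3"
    and ratio: "real (max_deg n Gn) / real (min_deg n Gn) < 21/20"
    and lam: "norm (lambda_graph n Gn) \<le> 1/20 * norm (real (max_deg n Gn))"
    and e4: "sqrt (ln (real n)) + 1 \<le> real n / 40"
    and Sn: "S \<subseteq> {..<n}" "S \<noteq> {}"
    and rdef: "r = 1 - (1 - exp (- q / 8)) / 2" and r0: "0 \<le> r"
    and rL: "2 * r ^ L \<le> 1"
    and mdef: "m = nat \<lceil>sqrt (ln (real n))\<rceil>"
  shows "1 - 2 * r ^ L \<le> measure_pmf.prob (rumour_run P n Hn q (m * L) S) {J. real (card J) \<ge> sqrt (ln (real n))}"
proof -
  have n2: "n \<ge> 2" using n3 by simp
  define d where "d = real (min_deg n Gn)"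
  define D where "D = real (max_deg n Gn)"
  have d1: "d \<ge> 1" using min_deg_pos[OF sgG connG n2] by (simp add: d_def)
  have "D / d < 21/20" using ratio by (simp add: D_def d_def)
  then have Dd: "D \<le> 21/20 * d" using d1 by (simp add: divide_less_eq)
  have lamD: "lambda_graph n Gn \<le> D / 20" using lam by (simp add: D_def)
  have l0: "ln (real n) > 0" using n3 by simp
  have mn: "real m \<le> real n / 40"
  proof -
    have "real m \<le> sqrt (ln (real n)) + 1" unfolding mdef by (rule nat_ceiling_bounds(2)) (use l0 in simp)
    then show ?thesis using e4 by simp
  qed
  have Dd': "real (max_deg n Gn) \<le> 21/20 * real (min_deg n Gn)" using Dd by (simp add: D_def d_def)
  have lamD': "lambda_graph n Gn \<le> real (max_deg n Gn) / 20" using lamD by (simp add: D_def)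
  have gn: "measure_pmf.prob (rumour_run P n Hn q (m * L) S) {J. card J < m}
      \<le> 2 ^ m * (1 - (1 - exp (- q / 8)) / 2) ^ (m * L)"
    by (rule good_n[OF sgG connG sgH subH degH eps q n2 Dd' lamD' mn Sn])
  then have bound: "measure_pmf.prob (rumour_run P n Hn q (m * L) S) {J. card J < m} \<le> 2 ^ m * r ^ (m * L)"
    unfolding rdef .
  have m1: "m \<ge> 1"
  proof -
    have "0 < m" unfolding mdef using less_nat_ceiling[of "sqrt (ln (real n))" 0] l0 by simp
    then show ?thesis by simp
  qed
  define x where "x = 2 * r ^ L"
  have x: "0 \<le> x" "x \<le> 1" using r0 rL by (auto simp: x_def)
  have "2 ^ m * r ^ (m * L) = x ^ m" unfolding x_def by (simp add: power_mult power_mult_distrib mult.commute)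
  also have "\<dots> \<le> x ^ 1" by (rule power_decreasing[OF m1 x])
  finally have b2: "measure_pmf.prob (rumour_run P n Hn q (m * L) S) {J. card J < m} \<le> x"
    using bound by simp
  have se: "{J. real (card J) \<ge> sqrt (ln (real n))} = UNIV - {J. card J < m}"
  proof -
    have "\<And>J. (card J < m) = (real (card J) < sqrt (ln (real n)))"
      unfolding mdef by (rule less_nat_ceiling) (use l0 in simp)
    then show ?thesis by (metis (mono_tags, lifting) Collect_cong Diff_Compl Int_UNIV_left Compl_eq Collect_neg_eq not_less mem_Collect_eq)
  qed
  have "measure_pmf.prob (rumour_run P n Hn q (m * L) S) {J. real (card J) \<ge> sqrt (ln (real n))}
      = 1 - measure_pmf.prob (rumour_run P n Hn q (m * L) S) {J. card J < m}"
    unfolding se using measure_pmf.prob_compl[of "{J. card J < m}" "rumour_run P n Hn q (m * L) S"] by simp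
  then show ?thesis using b2 by (simp add: x_def)
qed

theorem lemma2p13:
  fixes eps q :: real
    and G H :: "nat \<Rightarrow> nat \<Rightarrow> nat \<Rightarrow> bool"
    and P :: protocol
    and S :: "nat \<Rightarrow> nat set"
  assumes "0 < eps" and "eps \<le> 1/2"
    and "0 < q" and "q \<le> 1"
    and "expander_sequence G"
    and "\<forall>n. simple_graph n (H n) \<and> (\<forall>u v. H n u v \<longrightarrow> G n u v)"
    and "\<forall>n. \<forall>v<n. real (deg n (H n) v) \<ge> (1/2 + eps) * real (deg n (G n) v)"
    and "eventually (\<lambda>n. S n \<subseteq> {..<n} \<and> S n \<noteq> {} \<and> real (card (S n)) < sqrt (ln (real n)))
           sequentially"
  shows "\<exists>\<tau> :: nat \<Rightarrow> nat. (\<lambda>n. real (\<tau> n)) \<in> o(\<lambda>n. ln (real n)) \<and>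
           ((\<lambda>n. measure_pmf.prob (rumour_run P n (H n) q (\<tau> n) (S n))
                    {J. real (card J) \<ge> sqrt (ln (real n))}) \<longlonglongrightarrow> 1)"
proof -
  note ex = assms(5)[unfolded expander_sequence_def]
  have sgG: "simple_graph n (G n)" and connG: "connected_graph n (G n)" for n using ex by auto
  have ratio: "(\<lambda>n. real (max_deg n (G n)) / real (min_deg n (G n))) \<longlonglongrightarrow> 1" using ex by blast
  have smallo: "(\<lambda>n. lambda_graph n (G n)) \<in> o(\<lambda>n. real (max_deg n (G n)))" using ex by blast
  define m where "m n = nat \<lceil>sqrt (ln (real n))\<rceil>" for n :: nat
  define L where "L n = nat \<lceil>ln (real n) powr (1/4)\<rceil>" for n :: nat
  define r where "r = 1 - (1 - exp (- q / 8)) / 2"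
  have ex0: "0 < exp (- q / 8)" by simp
  have ex1: "exp (- q / 8) < 1" using assms(3) by (simp add: exp_less_one_iff)
  define e where "e = exp (- q / 8)"
  have e0: "0 < e" "e < 1" using ex0 ex1 by (simp_all add: e_def)
  have r0: "0 \<le> r" unfolding r_def e_def[symmetric] using e0 by simp
  have r1: "r < 1" unfolding r_def e_def[symmetric] using e0 by simp
  note r = r0 r1
  have o1: "(\<lambda>n. real (m n * L n)) \<in> o(\<lambda>n. ln (real n))"
    unfolding m_def L_def by (rule tau_o)
  have rL: "(\<lambda>n. r ^ L n) \<longlonglongrightarrow> 0"
    using filterlim_compose[OF LIMSEQ_power_zero[of r] L_fil] r by (simp add: L_def)
  have lim1: "(\<lambda>n. 1 - 2 * r ^ L n) \<longlonglongrightarrow> 1"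
    using tendsto_diff[OF tendsto_const[of 1] tendsto_mult[OF tendsto_const[of 2] rL]] by simp
  have e2: "eventually (\<lambda>n. real (max_deg n (G n)) / real (min_deg n (G n)) < 21/20) sequentially"
    by (rule order_tendstoD(2)[OF ratio]) simp
  have e3: "eventually (\<lambda>n. norm (lambda_graph n (G n)) \<le> 1/20 * norm (real (max_deg n (G n)))) sequentially"
    by (rule landau_o.smallD[OF smallo]) simp
  have e4: "eventually (\<lambda>n::nat. sqrt (ln (real n)) + 1 \<le> real n / 40) sequentially" by real_asymp
  have e6: "eventually (\<lambda>n. r ^ L n < 1/2) sequentially"
    by (rule order_tendstoD(2)[OF rL]) simp
  have ev: "eventually (\<lambda>n. 1 - 2 * r ^ L n \<le> measure_pmf.prob (rumour_run P n (H n) q (m n * L n) (S n))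
                    {J. real (card J) \<ge> sqrt (ln (real n))}) sequentially"
    using eventually_ge_at_top[of "3::nat"] e2 e3 e4 assms(8) e6
  proof eventually_elim
    case (elim n)
    have sgH: "simple_graph n (H n)" and subH: "\<forall>u v. H n u v \<longrightarrow> G n u v" using assms(6) by auto
    have degH: "\<forall>v<n. real (deg n (H n) v) \<ge> (1/2 + eps) * real (deg n (G n) v)" using assms(7) by blast
    have Sn: "S n \<subseteq> {..<n}" "S n \<noteq> {}" using elim(5) by auto
    have rL2: "2 * r ^ L n \<le> 1" using elim(6) by simp
    show ?case
      by (rule per_n[OF sgG connG sgH subH degH assms(1) assms(3) assms(4) elim(1) elim(2) elim(3) elim(4) Sn r_def r(1) rL2 m_def])
  qed
  have le1: "eventually (\<lambda>n. measure_pmf.prob (rumour_run P n (H n) q (m n * L n) (S n))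
                    {J. real (card J) \<ge> sqrt (ln (real n))} \<le> 1) sequentially"
    by (simp add: measure_pmf.prob_le_1)
  have "((\<lambda>n. measure_pmf.prob (rumour_run P n (H n) q (m n * L n) (S n))
                    {J. real (card J) \<ge> sqrt (ln (real n))}) \<longlonglongrightarrow> 1)"
    by (rule tendsto_sandwich[OF ev le1 lim1 tendsto_const])
  then show ?thesis using o1 by (intro exI[of _ "\<lambda>n. m n * L n"]) simp
qed

end
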